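(* Let $A\in\mathbb{B}(\mathcal{H})$ with Cartesian decomposition $A=B+iC$ ($B,C$ self-adjoint), let $r\ge2$, $p,q>1$ with $\frac1p+\frac1q=1$, and let $f_1,g_1,f_2,g_2$ be non-negative continuous functions on $[0,\infty)$ with $f_1(t)g_1(t)=f_2(t)g_2(t)=t$ for all $t\ge0$. Then \[ w^r(A)\le\frac12\left\|f_1^{rp}(|B+C|)+f_2^{rp}(|B-C|)\right\|^{1/p}\left\|g_1^{rq}(|B+C|)+g_2^{rq}(|B-C|)\right\|^{1/q} \] and \[ w^r(A)\le\frac12\left\|f_1^{rp}(|B+C|)+g_2^{rp}(|B-C|)\right\|^{1/p}\left\|g_1^{rq}(|B+C|)+f_2^{rq}(|B-C|)\right\|^{1/q}. \]
   Context: $\mathcal{H}$ is a complex Hilbert space; $w(X)=\sup\{|\langle Xx,x\rangle|:\|x\|=1\}$ is the numerical radius; $|X|=(X^*X)^{1/2}$; the Cartesian decomposition is $B=\frac{A+A^*}{2}$, $C=\frac{A-A^*}{2i}$; $f^s(|X|)$ denotes $(f(|X|))^s$ via continuous functional calculus; $\|\cdot\|$ is the operator norm. *)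

theory Defs
  imports "HOL-Analysis.Analysis" "HOL-Computational_Algebra.Polynomial"
begin

class chilbert = ab_group_add +
  fixes hscale :: "complex \<Rightarrow> 'a \<Rightarrow> 'a" (infixr \<open>*\<^sub>H\<close> 75)
    and hinner :: "'a \<Rightarrow> 'a \<Rightarrow> complex"
  assumes hscale_add_right: "a *\<^sub>H (x + y) = a *\<^sub>H x + a *\<^sub>H y"
    and hscale_add_left: "(a + b) *\<^sub>H x = a *\<^sub>H x + b *\<^sub>H x"
    and hscale_hscale: "a *\<^sub>H (b *\<^sub>H x) = (a * b) *\<^sub>H x"
    and hscale_one: "1 *\<^sub>H x = x"
    and hinner_add_right: "hinner x (y + z) = hinner x y + hinner x z"
    and hinner_scale_right: "hinner x (a *\<^sub>H y) = a * hinner x y"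
    and hinner_commute: "hinner x y = cnj (hinner y x)"
    and hinner_nonneg: "0 \<le> Re (hinner x x)"
    and hinner_eq_zero: "hinner x x = 0 \<Longrightarrow> x = 0"
    and hcomplete: "(\<forall>e>0. \<exists>N. \<forall>m\<ge>N. \<forall>n\<ge>N.
                       sqrt (Re (hinner (X m - X n) (X m - X n))) < e)
                    \<Longrightarrow> \<exists>L. (\<lambda>n. sqrt (Re (hinner (X n - L) (X n - L)))) \<longlonglongrightarrow> 0"

definition hnorm :: "'a::chilbert \<Rightarrow> real" where
  "hnorm x = sqrt (Re (hinner x x))"

definition bounded_op :: "('a::chilbert \<Rightarrow> 'a) \<Rightarrow> bool" where
  "bounded_op T \<longleftrightarrow> (\<forall>x y. T (x + y) = T x + T y) \<and> (\<forall>a x. T (a *\<^sub>H x) = a *\<^sub>H T x)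
     \<and> (\<exists>K. \<forall>x. hnorm (T x) \<le> K * hnorm x)"

definition opnorm :: "('a::chilbert \<Rightarrow> 'a) \<Rightarrow> real" where
  "opnorm T = Sup {hnorm (T x) | x. hnorm x \<le> 1}"

definition adjoint :: "('a::chilbert \<Rightarrow> 'a) \<Rightarrow> ('a \<Rightarrow> 'a)" where
  "adjoint T = (SOME S. \<forall>x y. hinner (T x) y = hinner x (S y))"

definition selfadjoint :: "('a::chilbert \<Rightarrow> 'a) \<Rightarrow> bool" where
  "selfadjoint T \<longleftrightarrow> (\<forall>x y. hinner (T x) y = hinner x (T y))"

text \<open>Numerical radius (sup over the closed unit ball; equal to the sup over
  the unit sphere for nonzero spaces, and 0 for the zero space).\<close>
definition numrad :: "('a::chilbert \<Rightarrow> 'a) \<Rightarrow> real" where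
  "numrad T = Sup {cmod (hinner x (T x)) | x. hnorm x \<le> 1}"

definition poly_op :: "real poly \<Rightarrow> ('a::chilbert \<Rightarrow> 'a) \<Rightarrow> ('a \<Rightarrow> 'a)" where
  "poly_op P T = (\<lambda>x. \<Sum>i\<le>degree P. complex_of_real (coeff P i) *\<^sub>H (T ^^ i) x)"

text \<open>A compact interval containing the spectrum of a self-adjoint operator T.\<close>
definition spec_lo :: "('a::chilbert \<Rightarrow> 'a) \<Rightarrow> real" where
  "spec_lo T = Inf {Re (hinner x (T x)) | x. hnorm x \<le> 1}"

definition spec_hi :: "('a::chilbert \<Rightarrow> 'a) \<Rightarrow> real" where
  "spec_hi T = Sup {Re (hinner x (T x)) | x. hnorm x \<le> 1}"

text \<open>f(T): the operator-norm limit of P_n(T) for any sequence of real polynomials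
  P_n converging uniformly to f on an interval containing the spectrum of T
  (Weierstrass approximation); this is the continuous functional calculus.\<close>
definition fcalc :: "(real \<Rightarrow> real) \<Rightarrow> ('a::chilbert \<Rightarrow> 'a) \<Rightarrow> ('a \<Rightarrow> 'a)" where
  "fcalc f T = (THE S. bounded_op S \<and>
     (\<forall>P :: nat \<Rightarrow> real poly.
        (\<forall>e>0. \<exists>N. \<forall>n\<ge>N. \<forall>t\<in>{spec_lo T..spec_hi T}. \<bar>poly (P n) t - f t\<bar> < e)
        \<longrightarrow> (\<lambda>n. opnorm (\<lambda>x. poly_op (P n) T x - S x)) \<longlonglongrightarrow> 0))"

definition absop :: "('a::chilbert \<Rightarrow> 'a) \<Rightarrow> ('a \<Rightarrow> 'a)" where
  "absop X = fcalc sqrt (\<lambda>x. adjoint X (X x))"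

text \<open>f^s(|X|) = (f(|X|))^s, i.e. (fpow f s X) with X already the positive operator.\<close>
definition fpow :: "(real \<Rightarrow> real) \<Rightarrow> real \<Rightarrow> ('a::chilbert \<Rightarrow> 'a) \<Rightarrow> ('a \<Rightarrow> 'a)" where
  "fpow f s X = fcalc (\<lambda>t. t powr s) (fcalc f X)"

end

theory Submission
  imports Defs "HOL-Computational_Algebra.Fundamental_Theorem_Algebra"
begin
lemma hscale_zero_left[simp]: "0 *\<^sub>H x = (0::'a::chilbert)"
  using hscale_add_left[of 0 0 x] by simp
lemma hscale_zero_right[simp]: "a *\<^sub>H (0::'a::chilbert) = 0"
  using hscale_add_right[of a 0 0] by simp
lemma hscale_minus_right: "a *\<^sub>H (- x) = - (a *\<^sub>H (x::'a::chilbert))"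
  using hscale_add_right[of a x "-x"] by (simp add: eq_neg_iff_add_eq_0 add.commute)
lemma hscale_minus_left: "(- a) *\<^sub>H x = - (a *\<^sub>H (x::'a::chilbert))"
  using hscale_add_left[of a "-a" x] by (simp add: eq_neg_iff_add_eq_0 add.commute)
lemma hscale_diff_right: "a *\<^sub>H (x - y) = a *\<^sub>H x - a *\<^sub>H (y::'a::chilbert)"
  by (simp only: diff_conv_add_uminus hscale_add_right hscale_minus_right)
lemma hscale_diff_left: "(a - b) *\<^sub>H x = a *\<^sub>H x - b *\<^sub>H (x::'a::chilbert)"
  by (simp only: diff_conv_add_uminus hscale_add_left hscale_minus_left)
lemma hscale_sum_right: "a *\<^sub>H (sum f S) = sum (\<lambda>i. a *\<^sub>H (f i::'a::chilbert)) S"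
  by (induct S rule: infinite_finite_induct) (auto simp: hscale_add_right)
lemma hscale_sum_left: "(sum f S) *\<^sub>H x = sum (\<lambda>i. f i *\<^sub>H (x::'a::chilbert)) S"
  by (induct S rule: infinite_finite_induct) (auto simp: hscale_add_left)

lemma hinner_add_left: "hinner (x + y) (z::'a::chilbert) = hinner x z + hinner y z"
  by (metis complex_cnj_add hinner_add_right hinner_commute)
lemma hinner_scale_left: "hinner (a *\<^sub>H x) (y::'a::chilbert) = cnj a * hinner x y"
  by (metis complex_cnj_cnj complex_cnj_mult hinner_commute hinner_scale_right)
lemma hinner_zero_right[simp]: "hinner x (0::'a::chilbert) = 0"
  using hinner_add_right[of x 0 0] by simp
lemma hinner_zero_left[simp]: "hinner (0::'a::chilbert) x = 0"
  using hinner_add_left[of 0 0 x] by simp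
lemma hinner_minus_right: "hinner x (- y) = - hinner x (y::'a::chilbert)"
  using hinner_add_right[of x y "-y"] by (simp add: eq_neg_iff_add_eq_0 add.commute)
lemma hinner_minus_left: "hinner (- x) y = - hinner x (y::'a::chilbert)"
  using hinner_add_left[of x "-x" y] by (simp add: eq_neg_iff_add_eq_0 add.commute)
lemma hinner_diff_right: "hinner x (y - z) = hinner x y - hinner x (z::'a::chilbert)"
  by (simp only: diff_conv_add_uminus hinner_add_right hinner_minus_right)
lemma hinner_diff_left: "hinner (x - y) z = hinner x z - hinner y (z::'a::chilbert)"
  by (simp only: diff_conv_add_uminus hinner_add_left hinner_minus_left)
lemma hinner_sum_right: "hinner x (sum f S) = sum (\<lambda>i. hinner x (f i::'a::chilbert)) S"
  by (induct S rule: infinite_finite_induct) (auto simp: hinner_add_right)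

lemmas hinner_simps = hinner_add_left hinner_add_right hinner_scale_left hinner_scale_right
  hinner_minus_left hinner_minus_right hinner_diff_left hinner_diff_right

lemma hinner_self_Im: "Im (hinner x (x::'a::chilbert)) = 0"
proof -
  have "Im (hinner x x) = Im (cnj (hinner x x))" using hinner_commute[of x x] by simp
  then show ?thesis by simp
qed

lemma hinner_self_real: "hinner x (x::'a::chilbert) = complex_of_real (Re (hinner x x))"
  using hinner_self_Im[of x] by (simp add: complex_eq_iff)

lemma hnorm_nonneg[simp]: "0 \<le> hnorm x"
  unfolding hnorm_def by (rule real_sqrt_ge_zero[OF hinner_nonneg])

lemma hnorm_sq: "hnorm x ^ 2 = Re (hinner x (x::'a::chilbert))"
  unfolding hnorm_def by (rule real_sqrt_pow2[OF hinner_nonneg])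

lemma hinner_self_hnorm: "hinner x (x::'a::chilbert) = complex_of_real (hnorm x ^ 2)"
  using hinner_self_real hnorm_sq by metis

lemma hnorm_zero[simp]: "hnorm (0::'a::chilbert) = 0"
  by (simp add: hnorm_def)

lemma hnorm_eq_0[simp]: "hnorm x = 0 \<longleftrightarrow> x = (0::'a::chilbert)"
  by (metis hinner_eq_zero hinner_self_hnorm hnorm_zero of_real_0 power_zero_numeral)

lemma hnorm_pos: "x \<noteq> 0 \<Longrightarrow> 0 < hnorm (x::'a::chilbert)"
  using hnorm_eq_0 hnorm_nonneg by (metis order_less_le)

lemma hnorm_scale: "hnorm (a *\<^sub>H x) = cmod a * hnorm (x::'a::chilbert)"
proof -
  have aa: "cnj a * a = complex_of_real ((cmod a)^2)"
    by (metis complex_norm_square mult.commute)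
  have "hinner (a *\<^sub>H x) (a *\<^sub>H x) = complex_of_real ((cmod a)^2) * hinner x x"
    by (simp only: hinner_scale_left hinner_scale_right mult.assoc[symmetric] mult.commute[of a "cnj a"] aa)
  then have "hnorm (a *\<^sub>H x) ^2 = ((cmod a) * hnorm x)^2"
    by (simp add: hnorm_sq[of "a *\<^sub>H x"] power_mult_distrib hinner_self_hnorm[of x])
  then show ?thesis
    by (simp add: power2_eq_iff_nonneg)
qed

lemma hnorm_minus: "hnorm (- x) = hnorm (x::'a::chilbert)"
  using hnorm_scale[of "-1" x] by (simp add: hscale_minus_left hscale_one)

lemma hnorm_diff_commute: "hnorm (x - y) = hnorm (y - (x::'a::chilbert))"
  by (metis hnorm_minus minus_diff_eq)

lemma cauchy_schwarz: "cmod (hinner x y) \<le> hnorm x * hnorm (y::'a::chilbert)"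
proof (cases "y = 0")
  case True then show ?thesis by simp
next
  case False
  define c where "c = hinner y y"
  define b where "b = hinner y x"
  have c: "c = complex_of_real (hnorm y ^ 2)" by (simp add: c_def hinner_self_hnorm)
  have bx: "hinner x y = cnj b" by (simp add: b_def hinner_commute[of x y])
  define w where "w = c *\<^sub>H x - b *\<^sub>H y"
  have "hinner w w = cnj c * c * hinner x x - cnj c * b * hinner x y
         - cnj b * c * hinner y x + cnj b * b * hinner y y"
    by (simp add: w_def hinner_simps algebra_simps)
  also have "\<dots> = c * (c * hinner x x - cnj b * b)"
    by (simp add: bx c b_def[symmetric] c_def[symmetric] algebra_simps)
  finally have "0 \<le> Re (c * (c * hinner x x - cnj b * b))"
    using hinner_nonneg[of w] by simp
  moreover have "Re (c * (c * hinner x x - cnj b * b)) = hnorm y ^ 2 * (hnorm y ^ 2 * hnorm x ^ 2 - (cmod b)^2)"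
  proof -
    have bb: "cnj b * b = complex_of_real ((cmod b)^2)" by (metis complex_norm_square mult.commute)
    show ?thesis unfolding bb c hinner_self_hnorm[of x]
      by (simp only: of_real_mult[symmetric] of_real_diff[symmetric] Re_complex_of_real)
  qed
  ultimately have "0 \<le> hnorm y ^ 2 * (hnorm y ^ 2 * hnorm x ^ 2 - (cmod b)^2)"
    by simp
  moreover have "0 < hnorm y ^ 2" using False hnorm_pos by auto
  ultimately have "(cmod b)^2 \<le> (hnorm x * hnorm y)^2"
    by (simp add: zero_le_mult_iff power_mult_distrib mult.commute)
  then have "cmod b \<le> hnorm x * hnorm y"
    by (meson hnorm_nonneg mult_nonneg_nonneg power2_le_imp_le)
  moreover have "cmod (hinner x y) = cmod b" by (simp add: bx)
  ultimately show ?thesis by simp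
qed

lemma hnorm_triangle: "hnorm (x + y) \<le> hnorm x + hnorm (y::'a::chilbert)"
proof -
  have "hnorm (x + y) ^ 2 = Re (hinner x x) + Re (hinner x y) + Re (hinner y x) + Re (hinner y y)"
    by (simp add: hnorm_sq hinner_simps)
  also have "Re (hinner y x) = Re (hinner x y)"
    by (subst hinner_commute) simp
  also have "Re (hinner x y) \<le> hnorm x * hnorm y"
    using cauchy_schwarz[of x y] complex_Re_le_cmod order_trans by blast
  finally have "hnorm (x + y) ^ 2 \<le> (hnorm x + hnorm y)^2"
    by (simp add: hnorm_sq[symmetric] power2_sum)
  then show ?thesis
    using power2_le_imp_le by (metis add_nonneg_nonneg hnorm_nonneg)
qed

lemma hnorm_triangle_diff: "hnorm (x - z) \<le> hnorm (x - y) + hnorm (y - (z::'a::chilbert))"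
  using hnorm_triangle[of "x - y" "y - z"] by simp

lemma hnorm_diff_le: "hnorm (x - y) \<le> hnorm x + hnorm (y::'a::chilbert)"
  using hnorm_triangle[of x "-y"] by (simp add: hnorm_minus)

lemma bo_add: "bounded_op T \<Longrightarrow> T (x + y) = T x + T (y::'a::chilbert)"
  by (simp add: bounded_op_def)
lemma bo_scale: "bounded_op T \<Longrightarrow> T (a *\<^sub>H x) = a *\<^sub>H T (x::'a::chilbert)"
  by (simp add: bounded_op_def)
lemma bo_zero: "bounded_op T \<Longrightarrow> T 0 = (0::'a::chilbert)"
  using bo_scale[of T 0 0] by simp
lemma bo_minus: "bounded_op T \<Longrightarrow> T (- x) = - T (x::'a::chilbert)"
  using bo_scale[of T "-1" x] by (simp add: hscale_minus_left hscale_one)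
lemma bo_diff: "bounded_op T \<Longrightarrow> T (x - y) = T x - T (y::'a::chilbert)"
  by (simp only: diff_conv_add_uminus bo_add bo_minus)
lemma bo_sum: "bounded_op T \<Longrightarrow> T (sum f S) = sum (\<lambda>i. T (f i::'a::chilbert)) S"
  by (induct S rule: infinite_finite_induct) (auto simp: bo_add bo_zero)

lemma bo_bound: assumes "bounded_op T" shows "\<exists>K\<ge>0. \<forall>x. hnorm (T x) \<le> K * hnorm (x::'a::chilbert)"
proof -
  obtain K where K: "\<forall>x. hnorm (T x) \<le> K * hnorm x" using assms by (auto simp: bounded_op_def)
  have "\<forall>x. hnorm (T x) \<le> max K 0 * hnorm x"
    using K by (metis max.cobounded1 mult_right_mono hnorm_nonneg order_trans)
  then show ?thesis by (intro exI[of _ "max K 0"]) auto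
qed

lemma bounded_opI:
  assumes "\<And>x y. T (x + y) = T x + T y" "\<And>a x. T (a *\<^sub>H x) = a *\<^sub>H T x"
    "\<And>x. hnorm (T x) \<le> K * hnorm (x::'a::chilbert)"
  shows "bounded_op T"
  using assms unfolding bounded_op_def by blast

lemma bo_id: "bounded_op (\<lambda>x::'a::chilbert. x)"
  by (rule bounded_opI[where K=1]) auto

lemma bo_zero_op: "bounded_op (\<lambda>x::'a::chilbert. 0)"
  by (rule bounded_opI[where K=1]) auto

lemma bo_add_op: assumes "bounded_op S" "bounded_op T"
  shows "bounded_op (\<lambda>x::'a::chilbert. S x + T x)"
proof -
  obtain K1 K2 where K: "\<forall>x. hnorm (S x) \<le> K1 * hnorm x" "\<forall>x. hnorm (T x) \<le> K2 * hnorm x"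
    using assms bo_bound by metis
  show ?thesis
  proof (rule bounded_opI[where K="K1+K2"])
    fix x show "hnorm (S x + T x) \<le> (K1 + K2) * hnorm x"
      using hnorm_triangle[of "S x" "T x"] K by (smt (verit) distrib_right)
  qed (use assms in \<open>auto simp: bo_add bo_scale hscale_add_right\<close>)
qed

lemma bo_scale_op: assumes "bounded_op T"
  shows "bounded_op (\<lambda>x::'a::chilbert. c *\<^sub>H T x)"
proof -
  obtain K where K: "\<forall>x. hnorm (T x) \<le> K * hnorm x" "K \<ge> 0"
    using assms bo_bound by metis
  show ?thesis
  proof (rule bounded_opI[where K="cmod c * K"])
    fix x show "hnorm (c *\<^sub>H T x) \<le> (cmod c * K) * hnorm x"
      using K by (simp add: hnorm_scale mult.assoc mult_left_mono)
  qed (use assms in \<open>auto simp: bo_add bo_scale hscale_add_right hscale_hscale mult.commute\<close>)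
qed

lemma bo_minus_op: assumes "bounded_op T"
  shows "bounded_op (\<lambda>x::'a::chilbert. - T x)"
  using bo_scale_op[OF assms, of "-1"] by (simp add: hscale_minus_left hscale_one)

lemma bo_diff_op: assumes "bounded_op S" "bounded_op T"
  shows "bounded_op (\<lambda>x::'a::chilbert. S x - T x)"
  using bo_add_op[OF assms(1) bo_minus_op[OF assms(2)]] by simp

lemma bo_comp: assumes "bounded_op S" "bounded_op T"
  shows "bounded_op (\<lambda>x::'a::chilbert. S (T x))"
proof -
  obtain K1 K2 where K: "\<forall>x. hnorm (S x) \<le> K1 * hnorm x" "\<forall>x. hnorm (T x) \<le> K2 * hnorm x" "K1 \<ge> 0"
    using assms bo_bound by metis
  show ?thesis
  proof (rule bounded_opI[where K="K1*K2"])
    fix x show "hnorm (S (T x)) \<le> (K1 * K2) * hnorm x"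
      using K by (metis mult.assoc mult_left_mono order_trans)
  qed (use assms in \<open>auto simp: bo_add bo_scale\<close>)
qed

lemma bo_sum_op: assumes "\<And>i. i \<in> I \<Longrightarrow> bounded_op (F i)"
  shows "bounded_op (\<lambda>x::'a::chilbert. \<Sum>i\<in>I. F i x)"
  using assms
proof (induct I rule: infinite_finite_induct)
  case (infinite A) then show ?case by (simp add: bo_zero_op)
next
  case empty then show ?case by (simp add: bo_zero_op)
next
  case (insert i F) then show ?case by (simp add: bo_add_op)
qed

lemma bo_funpow: assumes "bounded_op T" shows "bounded_op (T ^^ n :: 'a::chilbert \<Rightarrow> 'a)"
proof (induct n)
  case 0 then show ?case using bo_id by (simp add: id_def)
next
  case (Suc n) then show ?case using bo_comp[OF assms Suc] by (simp add: comp_def)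
qed

section \<open>Operator norm\<close>

definition onset :: "('a::chilbert \<Rightarrow> 'a) \<Rightarrow> real set" where
  "onset T = {hnorm (T x) | x. hnorm x \<le> 1}"

lemma opnorm_onset: "opnorm T = Sup (onset T)"
  by (simp add: opnorm_def onset_def)

lemma onset_bdd: assumes "bounded_op T" shows "bdd_above (onset T)"
proof -
  obtain K where K: "\<forall>x. hnorm (T x) \<le> K * hnorm x" "K \<ge> 0"
    using assms bo_bound by metis
  have "hnorm (T x) \<le> K" if "hnorm x \<le> 1" for x
    using K that by (metis mult_left_mono mult.right_neutral order_trans)
  then show ?thesis unfolding onset_def bdd_above_def by blast
qed

lemma onset_ne: "onset T \<noteq> {}"
  unfolding onset_def by (auto intro!: exI[of _ 0])

lemma opnorm_ge: assumes "bounded_op T" "hnorm x \<le> 1"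
  shows "hnorm (T x) \<le> opnorm T"
  unfolding opnorm_onset using assms onset_bdd by (auto intro!: cSup_upper simp: onset_def)

lemma opnorm_nonneg: assumes "bounded_op T" shows "0 \<le> opnorm (T::'a::chilbert\<Rightarrow>'a)"
  using opnorm_ge[OF assms, of 0] by (simp add: bo_zero[OF assms])

lemma opnorm_bound: assumes "bounded_op T"
  shows "hnorm (T x) \<le> opnorm T * hnorm (x::'a::chilbert)"
proof (cases "x = 0")
  case True then show ?thesis by (simp add: bo_zero assms)
next
  case False
  define y where "y = complex_of_real (1 / hnorm x) *\<^sub>H x"
  have hx: "hnorm x > 0" using False hnorm_pos by auto
  have "hnorm y = 1" using hx False by (simp add: y_def hnorm_scale norm_divide)
  then have "hnorm (T y) \<le> opnorm T" using opnorm_ge[OF assms] by simp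
  moreover have "hnorm (T y) = hnorm (T x) / hnorm x"
    using hx by (simp add: y_def bo_scale[OF assms] hnorm_scale norm_divide)
  ultimately show ?thesis using hx by (simp add: divide_le_eq mult.commute)
qed

lemma opnorm_le: assumes "\<And>x. hnorm x \<le> 1 \<Longrightarrow> hnorm (T x) \<le> K"
  shows "opnorm T \<le> K"
  unfolding opnorm_onset using assms onset_ne
  by (intro cSup_least) (auto simp: onset_def)

lemma opnorm_le': assumes "K \<ge> 0" "\<And>x. hnorm (T x) \<le> K * hnorm x"
  shows "opnorm T \<le> K"
  using assms by (intro opnorm_le) (metis mult_left_mono mult.right_neutral order_trans)

lemma opnorm_add: assumes "bounded_op S" "bounded_op T"
  shows "opnorm (\<lambda>x::'a::chilbert. S x + T x) \<le> opnorm S + opnorm T"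
  using assms opnorm_nonneg[OF assms(1)] opnorm_nonneg[OF assms(2)]
  by (intro opnorm_le') (auto intro: order_trans[OF hnorm_triangle] add_mono opnorm_bound simp: distrib_right)

lemma opnorm_comp: assumes "bounded_op S" "bounded_op T"
  shows "opnorm (\<lambda>x::'a::chilbert. S (T x)) \<le> opnorm S * opnorm T"
proof (rule opnorm_le')
  show "0 \<le> opnorm S * opnorm T" by (simp add: assms opnorm_nonneg)
  fix x
  have "hnorm (S (T x)) \<le> opnorm S * hnorm (T x)" using opnorm_bound[OF assms(1)] .
  also have "\<dots> \<le> opnorm S * (opnorm T * hnorm x)"
    using opnorm_bound[OF assms(2)] opnorm_nonneg[OF assms(1)] by (simp add: mult_left_mono)
  finally show "hnorm (S (T x)) \<le> opnorm S * opnorm T * hnorm x" by (simp add: mult.assoc)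
qed

lemma opnorm_scale: assumes "bounded_op T"
  shows "opnorm (\<lambda>x::'a::chilbert. c *\<^sub>H T x) \<le> cmod c * opnorm T"
  using assms opnorm_nonneg[OF assms]
  by (intro opnorm_le') (auto simp: hnorm_scale mult.assoc intro: mult_left_mono opnorm_bound)

lemma opnorm_zero_imp: assumes "bounded_op T" "opnorm T \<le> 0" shows "T x = (0::'a::chilbert)"
  using opnorm_bound[OF assms(1), of x] assms(2) opnorm_nonneg[OF assms(1)]
  by (metis antisym hnorm_eq_0 hnorm_nonneg mult_zero_left)

lemma opnorm_diff_commute: "opnorm (\<lambda>x. S x - T x) = opnorm (\<lambda>x::'a::chilbert. T x - S x)"
  unfolding opnorm_def by (metis hnorm_diff_commute)

section \<open>Quadratic forms\<close>

lemma selfadjoint_Im: "selfadjoint T \<Longrightarrow> Im (hinner x (T x)) = 0"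
  unfolding selfadjoint_def
  by (metis Reals_cnj_iff complex_is_Real_iff hinner_commute)

lemma selfadjoint_real: "selfadjoint T \<Longrightarrow> hinner x (T x) = complex_of_real (Re (hinner x (T x)))"
  using selfadjoint_Im by (simp add: complex_eq_iff)

lemma qf_bound: assumes "bounded_op T"
  shows "\<bar>Re (hinner x (T x))\<bar> \<le> opnorm T * hnorm (x::'a::chilbert) ^ 2"
proof -
  have "\<bar>Re (hinner x (T x))\<bar> \<le> cmod (hinner x (T x))" by (rule abs_Re_le_cmod)
  also have "\<dots> \<le> hnorm x * hnorm (T x)" by (rule cauchy_schwarz)
  also have "\<dots> \<le> hnorm x * (opnorm T * hnorm x)"
    by (rule mult_left_mono[OF opnorm_bound[OF assms]]) simp
  finally show ?thesis by (simp add: power2_eq_square mult_ac)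
qed

definition qset :: "('a::chilbert \<Rightarrow> 'a) \<Rightarrow> real set" where
  "qset T = {Re (hinner x (T x)) | x. hnorm x \<le> 1}"

lemma qset_bdd: assumes "bounded_op T"
  shows "bdd_above (qset T)" "bdd_below (qset T)"
proof -
  have b: "\<bar>Re (hinner x (T x))\<bar> \<le> opnorm T" if "hnorm x \<le> 1" for x
  proof -
    have "hnorm x ^ 2 \<le> 1" using that by (simp add: power_le_one)
    then show ?thesis using qf_bound[OF assms, of x] opnorm_nonneg[OF assms]
      by (meson mult_left_le order_trans)
  qed
  then show "bdd_above (qset T)" unfolding qset_def bdd_above_def
    by (intro exI[of _ "opnorm T"]) (auto simp: abs_le_iff)
  from b show "bdd_below (qset T)" unfolding qset_def bdd_below_def
    by (intro exI[of _ "- opnorm T"]) (force simp: abs_le_iff)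
qed

lemma qset_ne: "qset T \<noteq> {}" "0 \<in> qset T"
  unfolding qset_def by (auto intro!: exI[of _ 0])

lemma spec_lo_qset: "spec_lo T = Inf (qset T)" by (simp add: spec_lo_def qset_def)
lemma spec_hi_qset: "spec_hi T = Sup (qset T)" by (simp add: spec_hi_def qset_def)

lemma spec_lo_le0: "bounded_op T \<Longrightarrow> spec_lo T \<le> 0"
  unfolding spec_lo_qset by (rule cInf_lower[OF qset_ne(2) qset_bdd(2)])
lemma spec_hi_ge0: "bounded_op T \<Longrightarrow> 0 \<le> spec_hi T"
  unfolding spec_hi_qset by (rule cSup_upper[OF qset_ne(2) qset_bdd(1)])

lemma qf_scale_unit:
  assumes "bounded_op T" "x \<noteq> 0"
  defines "y \<equiv> complex_of_real (1 / hnorm x) *\<^sub>H x"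
  shows "hnorm y = 1" "Re (hinner x (T x)) = hnorm x ^ 2 * Re (hinner y (T y))"
proof -
  have hx: "hnorm x > 0" using assms hnorm_pos by auto
  show "hnorm y = 1" using hx assms(2) by (simp add: y_def hnorm_scale norm_divide)
  have "hinner y (T y) = complex_of_real (1 / hnorm x ^ 2) * hinner x (T x)"
    by (simp add: y_def bo_scale[OF assms(1)] hinner_scale_left hinner_scale_right power2_eq_square)
  then show "Re (hinner x (T x)) = hnorm x ^ 2 * Re (hinner y (T y))"
    using hx by simp
qed

lemma qf_lo: assumes "bounded_op T"
  shows "spec_lo T * hnorm x ^ 2 \<le> Re (hinner x (T (x::'a::chilbert)))"
proof (cases "x = 0")
  case True then show ?thesis by (simp add: bo_zero assms)
next
  case False
  define y where "y = complex_of_real (1 / hnorm x) *\<^sub>H x"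
  note q = qf_scale_unit[OF assms False, folded y_def]
  have "spec_lo T \<le> Re (hinner y (T y))"
    unfolding spec_lo_qset using qset_bdd[OF assms] q(1)
    by (intro cInf_lower) (auto simp: qset_def)
  then show ?thesis using q(2) by (metis mult.commute mult_right_mono zero_le_power2)
qed

lemma qf_hi: assumes "bounded_op T"
  shows "Re (hinner x (T (x::'a::chilbert))) \<le> spec_hi T * hnorm x ^ 2"
proof (cases "x = 0")
  case True then show ?thesis by (simp add: bo_zero assms)
next
  case False
  define y where "y = complex_of_real (1 / hnorm x) *\<^sub>H x"
  note q = qf_scale_unit[OF assms False, folded y_def]
  have "Re (hinner y (T y)) \<le> spec_hi T"
    unfolding spec_hi_qset using qset_bdd[OF assms] q(1)
    by (intro cSup_upper) (auto simp: qset_def)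
  then show ?thesis using q(2) by (metis mult.commute mult_right_mono zero_le_power2)
qed

lemma spec_bounds: assumes "bounded_op T"
  shows "\<bar>spec_lo T\<bar> \<le> opnorm T" "\<bar>spec_hi T\<bar> \<le> opnorm T"
proof -
  have b: "\<bar>q\<bar> \<le> opnorm T" if qq: "q \<in> qset T" for q
  proof -
    obtain x where "q = Re (hinner x (T x))" "hnorm x \<le> 1" using qq unfolding qset_def by blast
    moreover have "hnorm x ^ 2 \<le> 1" using \<open>hnorm x \<le> 1\<close> by (simp add: power_le_one)
    ultimately show ?thesis using qf_bound[OF assms, of x] opnorm_nonneg[OF assms]
      by (meson mult_left_le order_trans)
  qed
  have "spec_hi T \<le> opnorm T" unfolding spec_hi_qset using qset_ne b
    by (intro cSup_least) (auto simp: abs_le_iff)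
  moreover have "- opnorm T \<le> spec_lo T"
  proof -
    have "\<And>q. q \<in> qset T \<Longrightarrow> - opnorm T \<le> q" using b by (metis abs_le_iff minus_le_iff)
    then show ?thesis unfolding spec_lo_qset using qset_ne by (intro cInf_greatest) auto
  qed
  ultimately show "\<bar>spec_lo T\<bar> \<le> opnorm T" "\<bar>spec_hi T\<bar> \<le> opnorm T"
    using spec_lo_le0[OF assms] spec_hi_ge0[OF assms] by auto
qed

lemma poly_op_ext: assumes "degree P \<le> n"
  shows "poly_op P T x = (\<Sum>i\<le>n. complex_of_real (coeff P i) *\<^sub>H (T ^^ i) (x::'a::chilbert))"
proof -
  have "(\<Sum>i\<le>n. complex_of_real (coeff P i) *\<^sub>H (T ^^ i) x) =
        (\<Sum>i\<le>degree P. complex_of_real (coeff P i) *\<^sub>H (T ^^ i) x)"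
    using assms by (intro sum.mono_neutral_right) (auto simp: coeff_eq_0)
  then show ?thesis by (simp add: poly_op_def)
qed

lemma poly_op_add: "poly_op (P + Q) T x = poly_op P T x + poly_op Q T (x::'a::chilbert)"
proof -
  let ?n = "max (degree P) (degree Q)"
  have "degree (P + Q) \<le> ?n" by (rule degree_add_le_max)
  then show ?thesis
    by (simp add: poly_op_ext[of _ ?n] hscale_add_left sum.distrib)
qed

lemma poly_op_smult: "poly_op (smult c P) T x = complex_of_real c *\<^sub>H poly_op P T (x::'a::chilbert)"
  by (simp add: poly_op_ext[of _ "degree P"] hscale_sum_right hscale_hscale)

lemma poly_op_minus: "poly_op (- P) T x = - poly_op P T (x::'a::chilbert)"
  using poly_op_smult[of "-1" P T x] by (simp add: hscale_minus_left hscale_one)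

lemma poly_op_diff: "poly_op (P - Q) T x = poly_op P T x - poly_op Q T (x::'a::chilbert)"
  using poly_op_add[of P "-Q" T x] by (simp add: poly_op_minus)

lemma poly_op_const: "poly_op [:c:] T x = complex_of_real c *\<^sub>H (x::'a::chilbert)"
  by (simp add: poly_op_def)

lemma poly_op_zero[simp]: "poly_op 0 T x = (0::'a::chilbert)"
  by (simp add: poly_op_def)

lemma poly_op_one: "poly_op 1 T x = (x::'a::chilbert)"
  by (simp add: poly_op_def hscale_one)

lemma poly_op_pCons: assumes "bounded_op T"
  shows "poly_op (pCons c P) T x = complex_of_real c *\<^sub>H x + T (poly_op P T (x::'a::chilbert))"
proof -
  let ?n = "degree P"
  have "degree (pCons c P) \<le> Suc ?n" by (simp add: degree_pCons_le)
  then have "poly_op (pCons c P) T x = (\<Sum>i\<le>Suc ?n. complex_of_real (coeff (pCons c P) i) *\<^sub>H (T ^^ i) x)"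
    by (rule poly_op_ext)
  also have "\<dots> = complex_of_real c *\<^sub>H x + (\<Sum>i\<le>?n. complex_of_real (coeff P i) *\<^sub>H (T ^^ Suc i) x)"
    by (subst sum.atMost_Suc_shift) simp
  also have "(\<Sum>i\<le>?n. complex_of_real (coeff P i) *\<^sub>H (T ^^ Suc i) x) = T (poly_op P T x)"
    by (simp add: poly_op_def bo_sum[OF assms] bo_scale[OF assms])
  finally show ?thesis .
qed

lemma poly_op_bounded: assumes "bounded_op T" shows "bounded_op (poly_op P (T::'a::chilbert \<Rightarrow> 'a))"
proof -
  have "bounded_op (\<lambda>x. \<Sum>i\<le>degree P. complex_of_real (coeff P i) *\<^sub>H (T ^^ i) x)"
    by (intro bo_sum_op bo_scale_op bo_funpow assms)
  then show ?thesis by (simp add: poly_op_def[abs_def])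
qed

lemma poly_op_mult: assumes "bounded_op T"
  shows "poly_op (P * Q) T x = poly_op P T (poly_op Q T (x::'a::chilbert))"
proof (induct P arbitrary: x rule: pCons_induct)
  case 0 then show ?case by simp
next
  case (pCons a p)
  have "poly_op (pCons a p * Q) T x = poly_op (smult a Q + pCons 0 (p * Q)) T x"
    by simp
  also have "\<dots> = complex_of_real a *\<^sub>H poly_op Q T x + T (poly_op p T (poly_op Q T x))"
    by (simp add: poly_op_add poly_op_smult poly_op_pCons[OF assms] pCons.hyps)
  also have "\<dots> = poly_op (pCons a p) T (poly_op Q T x)"
    by (simp add: poly_op_pCons[OF assms])
  finally show ?case .
qed

lemma poly_op_X: assumes "bounded_op T" shows "poly_op [:0, 1:] T x = T (x::'a::chilbert)"
proof -
  have e: "[:0,1:] = pCons 0 (1::real poly)" by simp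
  show ?thesis unfolding e by (simp add: poly_op_pCons[OF assms] poly_op_one)
qed

lemma poly_op_commute: assumes "bounded_op T"
  shows "poly_op P T (poly_op Q T x) = poly_op Q T (poly_op P T (x::'a::chilbert))"
  by (metis assms mult.commute poly_op_mult)

lemma poly_op_commute_T: assumes "bounded_op T"
  shows "poly_op P T (T x) = T (poly_op P T (x::'a::chilbert))"
  using poly_op_commute[OF assms, of P "[:0,1:]" x] by (simp add: poly_op_X[OF assms])

lemma poly_op_pcompose: assumes "bounded_op T"
  shows "poly_op (pcompose P Q) T x = poly_op P (poly_op Q T) (x::'a::chilbert)"
proof (induct P arbitrary: x rule: pCons_induct)
  case 0 then show ?case by simp
next
  case (pCons a p)
  have b: "bounded_op (poly_op Q T)" by (rule poly_op_bounded[OF assms])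
  show ?case
    by (simp add: pcompose_pCons poly_op_add poly_op_const poly_op_mult[OF assms]
        poly_op_pCons[OF b] pCons.hyps)
qed

lemma poly_op_cong: "(\<And>x. S x = T x) \<Longrightarrow> poly_op P S = poly_op P (T::'a::chilbert \<Rightarrow> 'a)"
proof -
  assume "\<And>x. S x = T x" then have "S = T" by auto
  then show ?thesis by simp
qed

lemma selfadjoint_funpow: assumes "selfadjoint T"
  shows "hinner ((T ^^ n) x) y = hinner x ((T ^^ n) (y::'a::chilbert))"
proof (induct n arbitrary: x y)
  case 0 then show ?case by simp
next
  case (Suc n)
  have "hinner ((T ^^ Suc n) x) y = hinner (T ((T ^^ n) x)) y" by simp
  also have "\<dots> = hinner ((T ^^ n) x) (T y)" using assms by (simp add: selfadjoint_def)
  also have "\<dots> = hinner x ((T ^^ n) (T y))" by (rule Suc)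
  also have "(T ^^ n) (T y) = (T ^^ Suc n) y" by (simp add: funpow_Suc_right del: funpow.simps)
  finally show ?case .
qed

lemma hinner_sum_left: "hinner (sum f S) y = sum (\<lambda>i. hinner (f i) (y::'a::chilbert)) S"
  by (induct S rule: infinite_finite_induct) (auto simp: hinner_add_left)

lemma poly_op_selfadjoint: assumes "selfadjoint T"
  shows "selfadjoint (poly_op P (T::'a::chilbert \<Rightarrow> 'a))"
  unfolding selfadjoint_def poly_op_def
  by (simp add: hinner_sum_left hinner_sum_right hinner_scale_left hinner_scale_right
      selfadjoint_funpow[OF assms])

lemma selfadjoint_add: "selfadjoint S \<Longrightarrow> selfadjoint T \<Longrightarrow> selfadjoint (\<lambda>x::'a::chilbert. S x + T x)"
  by (simp add: selfadjoint_def hinner_add_left hinner_add_right)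
lemma selfadjoint_diff: "selfadjoint S \<Longrightarrow> selfadjoint T \<Longrightarrow> selfadjoint (\<lambda>x::'a::chilbert. S x - T x)"
  by (simp add: selfadjoint_def hinner_diff_left hinner_diff_right)

definition posop :: "('a::chilbert \<Rightarrow> 'a) \<Rightarrow> bool" where
  "posop T \<longleftrightarrow> (\<forall>x. 0 \<le> Re (hinner x (T x)))"

definition Mg :: "real \<Rightarrow> real \<Rightarrow> nat \<Rightarrow> nat \<Rightarrow> real poly \<Rightarrow> real poly" where
  "Mg a b e d w = [:-a,1:]^e * [:b,-1:]^d * w * w"

inductive good :: "real \<Rightarrow> real \<Rightarrow> real poly \<Rightarrow> bool" for a b where
  good_zero: "good a b 0"
| good_step: "good a b p \<Longrightarrow> 0 \<le> c \<Longrightarrow> good a b (p + smult c (Mg a b e d w))"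

lemma good_gen: "0 \<le> c \<Longrightarrow> good a b (smult c (Mg a b e d w))"
  using good_step[OF good_zero, where c=c and e=e and d=d and w=w] by simp

lemma good_add: assumes "good a b q" "good a b p" shows "good a b (p + q)"
  using assms(1)
proof (induct rule: good.induct)
  case good_zero then show ?case using assms(2) by simp
next
  case (good_step q c e d w)
  then show ?case using good.good_step[of a b "p + q" c e d w] by (simp add: add.assoc)
qed

lemma Mg_mult: "Mg a b e d w * Mg a b e' d' w' = Mg a b (e + e') (d + d') (w * w')"
  by (simp add: Mg_def power_add mult_ac)

lemma good_mult_gen: "good a b q \<Longrightarrow> 0 \<le> c \<Longrightarrow> good a b (smult c (Mg a b e d w) * q)"
proof (induct q rule: good.induct)
  case good_zero then show ?case by (simp add: good.good_zero)
next
  case (good_step q c' e' d' w')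
  have "smult c (Mg a b e d w) * (q + smult c' (Mg a b e' d' w')) =
        smult c (Mg a b e d w) * q + smult (c * c') (Mg a b (e + e') (d + d') (w * w'))"
    by (simp add: distrib_left Mg_mult[symmetric] mult_ac)
  then show ?case using good_step by (simp add: good_add good_gen)
qed

lemma good_mult: "good a b p \<Longrightarrow> good a b q \<Longrightarrow> good a b (p * q)"
proof (induct p rule: good.induct)
  case good_zero then show ?case by (simp add: good.good_zero)
next
  case (good_step p c e d w)
  have "good a b (smult c (Mg a b e d w) * q)" using good_mult_gen good_step by blast
  then show ?case using good_step by (simp add: distrib_right good_add)
qed

lemma good_const: "0 \<le> c \<Longrightarrow> good a b [:c:]"
  using good_gen[of c a b 0 0 1] by (simp add: Mg_def)

lemma poly_ext_eq: "(\<And>t. poly p t = poly q (t::real)) \<Longrightarrow> p = q"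
  by (metis poly_eq_poly_eq_iff ext)

lemma poly_ge_closure:
  assumes "u < v" "\<And>t. u < t \<Longrightarrow> t < v \<Longrightarrow> 0 \<le> poly s (t::real)" "u \<le> t0" "t0 \<le> v"
  shows "0 \<le> poly s t0"
proof -
  have "continuous_on (closure {u<..<v}) (poly s)" by (intro continuous_intros)
  moreover have "t0 \<in> closure {u<..<v}" using assms by simp
  ultimately show ?thesis
    by (rule continuous_ge_on_closure) (use assms in auto)
qed

definition cev :: "real poly \<Rightarrow> complex \<Rightarrow> complex" where
  "cev p z = poly (map_poly complex_of_real p) z"

lemma cev_pCons: "cev (pCons a p) z = of_real a + z * cev p z"
  by (simp add: cev_def map_poly_pCons)

lemma map_of_real_add: "map_poly complex_of_real (p + q) = map_poly of_real p + map_poly of_real q"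
  by (intro poly_eqI) (simp add: coeff_map_poly)

lemma map_of_real_mult: "map_poly complex_of_real (p * q) = map_poly of_real p * map_poly of_real q"
proof (induct p rule: pCons_induct)
  case 0 then show ?case by simp
next
  case (pCons a p)
  show ?case
    by (simp add: map_of_real_add map_poly_smult map_poly_pCons pCons.hyps)
qed

lemma cev_add: "cev (p + q) z = cev p z + cev q z"
  by (simp add: cev_def map_of_real_add)
lemma cev_mult: "cev (p * q) z = cev p z * cev q z"
  by (simp add: cev_def map_of_real_mult)
lemma cev_zero[simp]: "cev 0 z = 0" by (simp add: cev_def)
lemma cev_real: "cev p (complex_of_real t) = complex_of_real (poly p t)"
  by (induct p) (simp_all add: cev_pCons)

lemma real_root_exists:
  assumes "degree p > 0" shows "\<exists>z. cev p z = 0"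
proof -
  have "degree (map_poly complex_of_real p) = degree p" by (rule degree_map_poly) simp
  then have "\<not> constant (poly (map_poly complex_of_real p))"
    using assms constant_degree[of "map_poly complex_of_real p"] by simp
  then show ?thesis unfolding cev_def using fundamental_theorem_of_algebra by blast
qed

lemma nonneg_good:
  assumes "a < b" "\<And>t. a \<le> t \<Longrightarrow> t \<le> b \<Longrightarrow> 0 \<le> poly p t"
  shows "good a b p"
  using assms(2)
proof (induct "degree p" arbitrary: p rule: less_induct)
  case less
  show ?case
  proof (cases "degree p = 0")
    case True
    then have p: "p = [:coeff p 0:]" using degree_0_id by metis
    have "0 \<le> poly p a" using less.prems assms(1) by auto
    then have "0 \<le> coeff p 0" by (subst (asm) p) simp
    then show ?thesis by (subst p) (rule good_const)
  next
    case False
    then have p0: "p \<noteq> 0" by auto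
    obtain z where z: "cev p z = 0" using real_root_exists False by auto
    show ?thesis
    proof (cases "Im z = 0")
      case True
      define r where "r = Re z"
      have "z = complex_of_real r" using True by (simp add: r_def complex_eq_iff)
      then have "poly p r = 0" using z cev_real by (metis of_real_eq_0_iff)
      then obtain q where pq: "p = [:-r, 1:] * q" using poly_eq_0_iff_dvd by (metis dvdE)
      have q0: "q \<noteq> 0" using pq p0 by auto
      have "degree ([:-r, 1:] * q) = 1 + degree q" by (subst degree_mult_eq) (use q0 in auto)
      then have dq: "degree q < degree p" using pq by simp
      have pt: "poly p t = (t - r) * poly q t" for t by (simp add: pq algebra_simps)
      consider "r \<le> a" | "b \<le> r" | "a < r" "r < b" by linarith
      then show ?thesis
      proof cases
        case 1
        have "0 \<le> poly q t" if "a \<le> t" "t \<le> b" for t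
        proof (rule poly_ge_closure[OF assms(1) _ that])
          fix s assume "a < s" "s < b"
          then have "0 \<le> (s - r) * poly q s" "s - r > 0" using less.prems[of s] pt[of s] 1 by auto
          then show "0 \<le> poly q s" using mult_pos_neg[of "s - r" "poly q s"] by linarith
        qed
        then have gq: "good a b q" using less.hyps[OF dq] by blast
        have "[:-r, 1:] = smult 1 (Mg a b 1 0 1) + smult (a - r) (Mg a b 0 0 1)"
          by (rule poly_ext_eq) (simp add: Mg_def)
        then have "good a b [:-r, 1:]" using 1
          by (metis good_add good_gen diff_ge_0_iff_ge zero_le_one)
        then show ?thesis using pq gq good_mult by metis
      next
        case 2
        have "0 \<le> poly (-q) t" if "a \<le> t" "t \<le> b" for t
        proof (rule poly_ge_closure[OF assms(1) _ that])
          fix s assume "a < s" "s < b"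
          then have "0 \<le> (s - r) * poly q s" "s - r < 0" using less.prems[of s] pt[of s] 2 by auto
          then show "0 \<le> poly (-q) s" using mult_neg_pos[of "s - r" "poly q s"] by (smt (verit) poly_minus)
        qed
        then have gq: "good a b (-q)" using less.hyps dq by (metis degree_minus)
        have "[:r, -1:] = smult 1 (Mg a b 0 1 1) + smult (r - b) (Mg a b 0 0 1)"
          by (rule poly_ext_eq) (simp add: Mg_def)
        then have "good a b [:r, -1:]" using 2
          by (metis good_add good_gen diff_ge_0_iff_ge zero_le_one)
        moreover have "p = [:r, -1:] * (-q)" by (rule poly_ext_eq) (simp add: pq algebra_simps)
        ultimately show ?thesis using gq good_mult by metis
      next
        case 3
        have "0 \<le> poly q r"
        proof (rule poly_ge_closure[of r b])
          fix s assume "r < s" "s < b"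
          then have "0 \<le> (s - r) * poly q s" "s - r > 0" using less.prems[of s] pt[of s] 3 by auto
          then show "0 \<le> poly q s" using mult_pos_neg[of "s - r" "poly q s"] by linarith
        qed (use 3 in auto)
        moreover have "0 \<le> poly (-q) r"
        proof (rule poly_ge_closure[of a r])
          fix s assume "a < s" "s < r"
          then have "0 \<le> (s - r) * poly q s" "s - r < 0" using less.prems[of s] pt[of s] 3 by auto
          then show "0 \<le> poly (-q) s" using mult_neg_pos[of "s - r" "poly q s"] by (smt (verit) poly_minus)
        qed (use 3 in auto)
        ultimately have "poly q r = 0" by simp
        then obtain s where qs: "q = [:-r, 1:] * s" using poly_eq_0_iff_dvd by (metis dvdE)
        have s0: "s \<noteq> 0" using qs q0 by auto
        have "degree ([:-r, 1:] * s) = 1 + degree s" by (subst degree_mult_eq) (use s0 in auto)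
        then have ds: "degree s < degree p" using qs dq by simp
        have ps: "poly p t = (t - r)^2 * poly s t" for t by (simp add: pq qs power2_eq_square algebra_simps)
        have "0 \<le> poly s t" if "a \<le> t" "t \<le> b" for t
        proof (cases "t = r")
          case False
          then have "(t - r)^2 > 0" by simp
          then show ?thesis using less.prems[OF that] ps[of t] mult_pos_neg[of "(t - r)^2" "poly s t"] by linarith
        next
          case True
          show ?thesis unfolding True
          proof (rule poly_ge_closure[of r b])
            fix u assume "r < u" "u < b"
            then have "(u - r)^2 > 0" "0 \<le> poly p u" using less.prems[of u] 3 by auto
            then show "0 \<le> poly s u" using ps[of u] mult_pos_neg[of "(u - r)^2" "poly s u"] by linarith
          qed (use 3 in auto)
        qed
        then have gs: "good a b s" using less.hyps[OF ds] by blast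
        have "good a b (smult 1 (Mg a b 0 0 [:-r, 1:]))" by (rule good_gen) simp
        moreover have "p = smult 1 (Mg a b 0 0 [:-r, 1:]) * s" by (rule poly_ext_eq) (simp add: pq qs Mg_def algebra_simps)
        ultimately show ?thesis using gs good_mult by metis
      qed
    next
      case False
      define x where "x = Re z"
      define y where "y = Im z"
      have y0: "y \<noteq> 0" using False by (simp add: y_def)
      define Q where "Q = [:x^2 + y^2, -2 * x, 1:]"
      have Qt: "poly Q t = (t - x)^2 + y^2" for t by (simp add: Q_def power2_eq_square algebra_simps)
      have Qpos: "poly Q t > 0" for t using Qt[of t] y0 by (simp add: add_nonneg_pos)
      have Q0: "Q \<noteq> 0" by (simp add: Q_def)
      have degQ: "degree Q = 2" by (simp add: Q_def)
      have cQ: "cev Q z = 0"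
        by (simp add: Q_def cev_pCons x_def y_def complex_eq_iff power2_eq_square algebra_simps)
      define s where "s = p div Q"
      define rr where "rr = p mod Q"
      have prs: "p = Q * s + rr" by (simp add: s_def rr_def mult.commute)
      have crr: "cev rr z = 0"
        using z cQ by (metis prs cev_add cev_mult add_0 mult_zero_left)
      have "rr = 0"
      proof -
        have "rr = 0 \<or> degree rr < 2" using degree_mod_less[OF Q0, of p] degQ by (simp add: rr_def)
        then have dr: "degree rr \<le> 1" by auto
        then have rr: "rr = [:coeff rr 0, coeff rr 1:]"
          by (intro poly_eqI) (auto simp: coeff_pCons coeff_eq_0 split: nat.splits)
        have "cev rr z = of_real (coeff rr 0) + z * of_real (coeff rr 1)"
          by (subst rr) (simp add: cev_pCons)
        then have "of_real (coeff rr 0) + z * of_real (coeff rr 1) = 0" using crr by simp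
        then have "coeff rr 1 * y = 0" "coeff rr 0 + x * coeff rr 1 = 0"
          by (simp_all add: complex_eq_iff x_def y_def mult.commute)
        then have "coeff rr 1 = 0" "coeff rr 0 = 0" using y0 by auto
        then show ?thesis by (subst rr) simp
      qed
      then have pQ: "p = Q * s" using prs by simp
      have s0: "s \<noteq> 0" using pQ p0 by auto
      have "degree (Q * s) = 2 + degree s" by (subst degree_mult_eq) (use s0 Q0 degQ in auto)
      then have ds: "degree s < degree p" using pQ by simp
      have "0 \<le> poly s t" if "a \<le> t" "t \<le> b" for t
        using less.prems[OF that] Qpos[of t] by (simp add: pQ zero_le_mult_iff)
      then have gs: "good a b s" using less.hyps[OF ds] by blast
      have "Q = smult 1 (Mg a b 0 0 [:-x, 1:]) + smult (y^2) (Mg a b 0 0 1)"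
        by (rule poly_ext_eq) (simp add: Qt Mg_def power2_eq_square algebra_simps)
      then have "good a b Q" by (metis good_add good_gen zero_le_one zero_le_power2)
      then show ?thesis using gs pQ good_mult by metis
    qed
  qed
qed

lemma good_eq: assumes "0 \<le> poly p a" shows "good a a p"
proof -
  obtain q where pq: "p - [:poly p a:] = [:-a, 1:] * q"
    using poly_eq_0_iff_dvd[of "p - [:poly p a:]" a] by (auto elim: dvdE)
  define w1 where "w1 = smult (1/2) (q + 1)"
  define w2 where "w2 = smult (1/2) (q - 1)"
  have "p = smult (poly p a) (Mg a a 0 0 1) + smult 1 (Mg a a 1 0 w1) + smult 1 (Mg a a 0 1 w2)"
  proof (rule poly_ext_eq)
    fix t
    have "poly p t = poly p a + (t - a) * poly q t"
      using arg_cong[OF pq, of "\<lambda>r. poly r t"] by (simp add: algebra_simps)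
    then show "poly p t = poly (smult (poly p a) (Mg a a 0 0 1) + smult 1 (Mg a a 1 0 w1) + smult 1 (Mg a a 0 1 w2)) t"
      by (simp add: Mg_def w1_def w2_def algebra_simps power2_eq_square)
  qed
  then show ?thesis using assms
    by (metis good_add good_gen zero_le_one)
qed

lemma nonneg_good': assumes "a \<le> b" "\<And>t. a \<le> t \<Longrightarrow> t \<le> b \<Longrightarrow> 0 \<le> poly p t"
  shows "good a b p"
proof (cases "a = b")
  case True then show ?thesis using good_eq assms by auto
next
  case False then show ?thesis using nonneg_good assms by auto
qed

context
  fixes T :: "'a::chilbert \<Rightarrow> 'a"
  assumes bT: "bounded_op T" and sT: "selfadjoint T"
begin

lemma spec_lo_le_hi: "spec_lo T \<le> spec_hi T"
  using spec_lo_le0[OF bT] spec_hi_ge0[OF bT] by simp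

lemma posY: "posop (poly_op [:- spec_lo T, 1:] T)"
  unfolding posop_def
proof
  fix x
  have "poly_op [:- spec_lo T, 1:] T x = complex_of_real (- spec_lo T) *\<^sub>H x + T x"
    by (simp add: poly_op_pCons[OF bT] poly_op_one bo_zero[OF bT] hscale_one)
  then have "Re (hinner x (poly_op [:- spec_lo T, 1:] T x)) = Re (hinner x (T x)) - spec_lo T * hnorm x ^ 2"
    by (simp add: hinner_add_right hinner_scale_right hinner_self_hnorm)
  then show "0 \<le> Re (hinner x (poly_op [:- spec_lo T, 1:] T x))" using qf_lo[OF bT, of x] by simp
qed

lemma posZ: "posop (poly_op [:spec_hi T, -1:] T)"
  unfolding posop_def
proof
  fix x
  have "poly_op [:spec_hi T, -1:] T x = complex_of_real (spec_hi T) *\<^sub>H x + T (complex_of_real (-1) *\<^sub>H x)"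
    by (simp add: poly_op_pCons[OF bT] poly_op_const bo_zero[OF bT] hscale_one)
  then have "Re (hinner x (poly_op [:spec_hi T, -1:] T x)) = spec_hi T * hnorm x ^ 2 - Re (hinner x (T x))"
    by (simp add: hinner_add_right hinner_scale_right hinner_self_hnorm bo_scale[OF bT])
  then show "0 \<le> Re (hinner x (poly_op [:spec_hi T, -1:] T x))" using qf_hi[OF bT, of x] by simp
qed

lemma posYZ: "posop (poly_op ([:- spec_lo T, 1:] * [:spec_hi T, -1:]) T)"
  unfolding posop_def
proof
  fix x
  define a where "a = spec_lo T"
  define b where "b = spec_hi T"
  define c where "c = b - a"
  have c0: "0 \<le> c" using spec_lo_le_hi by (simp add: c_def a_def b_def)
  define Y where "Y = poly_op [:- a, 1:] T"
  have bY: "bounded_op Y" by (simp add: Y_def poly_op_bounded bT)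
  have sY: "selfadjoint Y" by (simp add: Y_def poly_op_selfadjoint sT)
  have pY: "0 \<le> Re (hinner v (Y v))" for v using posY by (simp add: posop_def Y_def a_def)
  have Yhi: "Re (hinner v (Y v)) \<le> c * hnorm v ^ 2" for v
  proof -
    have "Y v = complex_of_real (- a) *\<^sub>H v + T v"
      by (simp add: Y_def poly_op_pCons[OF bT] poly_op_one bo_zero[OF bT] hscale_one)
    then have "Re (hinner v (Y v)) = Re (hinner v (T v)) - a * hnorm v ^ 2"
      by (simp add: hinner_add_right hinner_scale_right hinner_self_hnorm)
    then show ?thesis using qf_hi[OF bT, of v] by (simp add: c_def b_def algebra_simps)
  qed
  have eqp: "[:- a, 1:] * [:b, -1:] = smult c [:- a, 1:] - [:- a, 1:] * [:- a, 1:]"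
    by (rule poly_ext_eq) (simp add: c_def algebra_simps)
  define u where "u = Y x"
  have "poly_op ([:- a, 1:] * [:b, -1:]) T x = complex_of_real c *\<^sub>H u - Y u"
    by (simp only: eqp poly_op_diff poly_op_smult poly_op_mult[OF bT] Y_def u_def)
  then have q: "Re (hinner x (poly_op ([:- a, 1:] * [:b, -1:]) T x)) = c * Re (hinner x u) - hnorm u ^ 2"
    using sY by (simp add: hinner_diff_right hinner_scale_right selfadjoint_def u_def hnorm_sq)
  have q0: "Re (hinner x u) \<ge> 0" using pY by (simp add: u_def)
  have key: "0 \<le> Re (hinner x u) - 2 * s * hnorm u ^ 2 + s^2 * Re (hinner u (Y u))" for s :: real
  proof -
    have "0 \<le> Re (hinner (x - complex_of_real s *\<^sub>H u) (Y (x - complex_of_real s *\<^sub>H u)))" by (rule pY)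
    also have "\<dots> = Re (hinner x u) - 2 * s * hnorm u ^ 2 + s^2 * Re (hinner u (Y u))"
    proof -
      have "hinner x (Y u) = hinner u u" using sY by (simp add: selfadjoint_def u_def)
      moreover have "hinner u (Y x) = hinner u u" by (simp add: u_def)
      ultimately show ?thesis
        by (simp add: bo_diff[OF bY] bo_scale[OF bY] hinner_simps u_def[symmetric] hinner_self_hnorm
            power2_eq_square algebra_simps)
    qed
    finally show ?thesis .
  qed
  have "hnorm u ^ 2 \<le> c * Re (hinner x u)"
  proof (cases "c = 0")
    case True
    then have Yu: "Re (hinner u (Y u)) \<le> 0" using Yhi[of u] by simp
    show ?thesis
    proof (rule ccontr)
      assume "\<not> ?thesis"
      then have hu: "hnorm u ^ 2 > 0" using True by simp
      define s where "s = (Re (hinner x u) + 1) / (2 * hnorm u ^ 2)"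
      have "2 * s * hnorm u ^ 2 = Re (hinner x u) + 1" using hu by (simp add: s_def)
      then show False using key[of s] Yu by (smt (verit) zero_le_power2 mult_nonneg_nonpos)
    qed
  next
    case False
    then have cp: "c > 0" using c0 by simp
    have "0 \<le> Re (hinner x u) - 2 * (1/c) * hnorm u ^ 2 + (1/c)^2 * (c * hnorm u ^ 2)"
      using key[of "1/c"] Yhi[of u] by (smt (verit) mult_left_mono zero_le_power2)
    then have "0 \<le> Re (hinner x u) - hnorm u ^ 2 / c"
      using cp by (simp add: power2_eq_square field_simps)
    then show ?thesis using cp by (simp add: field_simps)
  qed
  then show "0 \<le> Re (hinner x (poly_op ([:- spec_lo T, 1:] * [:spec_hi T, -1:]) T x))"
    using q by (simp add: a_def b_def)
qed

lemma pos_sandwich: assumes "posop (poly_op E T)"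
  shows "posop (poly_op (E * W * W) T)"
  unfolding posop_def
proof
  fix x
  have "poly_op (E * W * W) T x = poly_op W T (poly_op E T (poly_op W T x))"
    by (metis mult.commute mult.assoc poly_op_mult[OF bT])
  then have "hinner x (poly_op (E * W * W) T x) = hinner (poly_op W T x) (poly_op E T (poly_op W T x))"
    using poly_op_selfadjoint[OF sT, of W] by (simp add: selfadjoint_def)
  then show "0 \<le> Re (hinner x (poly_op (E * W * W) T x))" using assms by (simp add: posop_def)
qed

lemma posop_add: "posop S \<Longrightarrow> posop S' \<Longrightarrow> posop (\<lambda>x. S x + S' x)"
  by (simp add: posop_def hinner_add_right add_nonneg_nonneg)

lemma posop_scale: "posop S \<Longrightarrow> 0 \<le> c \<Longrightarrow> posop (\<lambda>x. complex_of_real c *\<^sub>H S x)"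
  by (simp add: posop_def hinner_scale_right)

lemma pos_Mg: "posop (poly_op (Mg (spec_lo T) (spec_hi T) e d w) T)"
proof -
  define a where "a = spec_lo T"
  define b where "b = spec_hi T"
  define w' where "w' = w * [:-a,1:]^(e div 2) * [:b,-1:]^(d div 2)"
  have eq: "Mg a b e d w = [:-a,1:]^(e mod 2) * [:b,-1:]^(d mod 2) * w' * w'"
  proof -
    have "[:-a,1:]^e = [:-a,1:]^(e mod 2) * ([:-a,1:]^(e div 2)) * ([:-a,1:]^(e div 2))"
      by (metis (no_types) mod_mult_div_eq power_add power_mult mult_2 power2_eq_square add.commute mult.commute mult.assoc)
    moreover have "[:b,-1:]^d = [:b,-1:]^(d mod 2) * ([:b,-1:]^(d div 2)) * ([:b,-1:]^(d div 2))"
      by (metis (no_types) mod_mult_div_eq power_add power_mult mult_2 power2_eq_square add.commute mult.commute mult.assoc)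
    ultimately show ?thesis by (simp add: Mg_def w'_def mult_ac)
  qed
  have E: "posop (poly_op ([:-a,1:]^(e mod 2) * [:b,-1:]^(d mod 2)) T)"
  proof -
    have "e mod 2 = 0 \<or> e mod 2 = 1" "d mod 2 = 0 \<or> d mod 2 = 1" by auto
    moreover have "posop (poly_op 1 T)" by (simp add: posop_def poly_op_one hinner_self_hnorm)
    ultimately show ?thesis using posY posZ posYZ by (auto simp: a_def b_def)
  qed
  show ?thesis unfolding a_def[symmetric] b_def[symmetric] eq using pos_sandwich[OF E] by simp
qed

lemma good_posop: "good (spec_lo T) (spec_hi T) P \<Longrightarrow> posop (poly_op P T)"
proof (induct P rule: good.induct)
  case good_zero then show ?case by (simp add: posop_def)
next
  case (good_step p c e d w)
  have "poly_op (p + smult c (Mg (spec_lo T) (spec_hi T) e d w)) T =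
        (\<lambda>x. poly_op p T x + complex_of_real c *\<^sub>H poly_op (Mg (spec_lo T) (spec_hi T) e d w) T x)"
    by (rule ext) (simp add: poly_op_add poly_op_smult)
  then show ?case using good_step pos_Mg by (simp add: posop_add posop_scale)
qed

lemma nonneg_posop: assumes "\<And>t. spec_lo T \<le> t \<Longrightarrow> t \<le> spec_hi T \<Longrightarrow> 0 \<le> poly P t"
  shows "posop (poly_op P T)"
  using good_posop nonneg_good'[OF spec_lo_le_hi assms] by blast

lemma poly_op_norm: assumes "\<And>t. spec_lo T \<le> t \<Longrightarrow> t \<le> spec_hi T \<Longrightarrow> \<bar>poly P t\<bar> \<le> M"
  shows "opnorm (poly_op P T) \<le> M"
proof -
  have M0: "0 \<le> M" using assms[of 0] spec_lo_le0[OF bT] spec_hi_ge0[OF bT] by auto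
  have "posop (poly_op ([:M^2:] - P * P) T)"
  proof (rule nonneg_posop)
    fix t assume "spec_lo T \<le> t" "t \<le> spec_hi T"
    then have "\<bar>poly P t\<bar> \<le> M" by (rule assms)
    then have "(poly P t)^2 \<le> M^2" by (metis abs_ge_zero power2_abs power_mono)
    then show "0 \<le> poly ([:M^2:] - P * P) t" by (simp add: power2_eq_square)
  qed
  then have h: "hnorm (poly_op P T x) \<le> M * hnorm x" for x
  proof -
    assume pos: "posop (poly_op ([:M^2:] - P * P) T)"
    have e1: "poly_op ([:M^2:] - P * P) T x = complex_of_real (M^2) *\<^sub>H x - poly_op P T (poly_op P T x)"
      by (simp add: poly_op_diff poly_op_const poly_op_mult[OF bT])
    have e2: "hinner x (poly_op P T (poly_op P T x)) = hinner (poly_op P T x) (poly_op P T x)"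
      using poly_op_selfadjoint[OF sT, of P] by (simp add: selfadjoint_def)
    have "Re (hinner x (poly_op ([:M^2:] - P * P) T x)) = M^2 * hnorm x ^ 2 - hnorm (poly_op P T x) ^ 2"
      by (simp add: e1 e2 hinner_diff_right hinner_scale_right hinner_self_hnorm)
    moreover have "0 \<le> Re (hinner x (poly_op ([:M^2:] - P * P) T x))" using pos by (simp add: posop_def)
    ultimately have "hnorm (poly_op P T x) ^ 2 \<le> (M * hnorm x) ^ 2"
      by (simp add: power_mult_distrib)
    then show ?thesis using M0 by (meson hnorm_nonneg mult_nonneg_nonneg power2_le_imp_le)
  qed
  show ?thesis by (rule opnorm_le'[OF M0 h])
qed

end

lemma to0:
  assumes "\<And>n. 0 \<le> f n" "\<And>e. e > 0 \<Longrightarrow> \<exists>N. \<forall>n\<ge>N. f n \<le> e"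
  shows "f \<longlonglongrightarrow> (0::real)"
proof (rule LIMSEQ_I)
  fix r :: real assume r: "0 < r"
  obtain N where "\<forall>n\<ge>N. f n \<le> r / 2" using assms(2)[of "r/2"] r by auto
  show "\<exists>no. \<forall>n\<ge>no. norm (f n - 0) < r"
  proof (intro exI[of _ N] allI impI)
    fix n assume "n \<ge> N"
    then have "f n \<le> r / 2" using \<open>\<forall>n\<ge>N. f n \<le> r / 2\<close> by blast
    then show "norm (f n - 0) < r" using assms(1)[of n] r by auto
  qed
qed

lemma to0D:
  assumes "f \<longlonglongrightarrow> (0::real)" "e > 0" shows "\<exists>N. \<forall>n\<ge>N. f n < e"
  using LIMSEQ_D[OF assms] by (metis abs_less_iff diff_zero real_norm_def)

definition hlim :: "(nat \<Rightarrow> 'a::chilbert) \<Rightarrow> 'a \<Rightarrow> bool" where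
  "hlim X L \<longleftrightarrow> (\<lambda>n. hnorm (X n - L)) \<longlonglongrightarrow> 0"

lemma hlimD: "hlim X L \<Longrightarrow> e > 0 \<Longrightarrow> \<exists>N. \<forall>n\<ge>N. hnorm (X n - L) < e"
  unfolding hlim_def by (rule to0D)

lemma hlimI: "(\<And>e. e > 0 \<Longrightarrow> \<exists>N. \<forall>n\<ge>N. hnorm (X n - L) \<le> e) \<Longrightarrow> hlim X L"
  unfolding hlim_def by (rule to0) auto

lemma hlim_unique: assumes "hlim X L1" "hlim X L2" shows "L1 = L2"
proof (rule ccontr)
  assume ne: "L1 \<noteq> L2"
  define d where "d = hnorm (L1 - L2)"
  have d: "d > 0" using ne hnorm_pos[of "L1 - L2"] by (simp add: d_def)
  obtain N1 where N1: "\<forall>n\<ge>N1. hnorm (X n - L1) < d/2" using hlimD[OF assms(1), of "d/2"] d by auto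
  obtain N2 where N2: "\<forall>n\<ge>N2. hnorm (X n - L2) < d/2" using hlimD[OF assms(2), of "d/2"] d by auto
  define n where "n = max N1 N2"
  have "d \<le> hnorm (L1 - X n) + hnorm (X n - L2)" unfolding d_def by (rule hnorm_triangle_diff)
  also have "\<dots> < d/2 + d/2"
  proof -
    have "hnorm (X n - L1) < d/2" "hnorm (X n - L2) < d/2" using N1 N2 by (auto simp: n_def)
    then show ?thesis by (simp add: hnorm_diff_commute[of L1])
  qed
  finally show False by simp
qed

lemma hlim_add: assumes "hlim X a" "hlim Y b" shows "hlim (\<lambda>n. X n + Y n) (a + b)"
proof (rule hlimI)
  fix e :: real assume e: "e > 0"
  obtain N1 where N1: "\<forall>n\<ge>N1. hnorm (X n - a) < e/2" using hlimD[OF assms(1), of "e/2"] e by auto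
  obtain N2 where N2: "\<forall>n\<ge>N2. hnorm (Y n - b) < e/2" using hlimD[OF assms(2), of "e/2"] e by auto
  have "hnorm (X n + Y n - (a + b)) \<le> e" if "n \<ge> max N1 N2" for n
  proof -
    have "X n + Y n - (a + b) = (X n - a) + (Y n - b)" by (simp add: algebra_simps)
    then have "hnorm (X n + Y n - (a + b)) \<le> hnorm (X n - a) + hnorm (Y n - b)"
      using hnorm_triangle by metis
    then show ?thesis using N1 N2 that by force
  qed
  then show "\<exists>N. \<forall>n\<ge>N. hnorm (X n + Y n - (a + b)) \<le> e" by blast
qed

lemma hlim_bo: assumes "bounded_op S" "hlim X a" shows "hlim (\<lambda>n. S (X n)) (S a)"
proof (rule hlimI)
  fix e :: real assume e: "e > 0"
  define K where "K = opnorm S + 1"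
  have K: "K > 0" using opnorm_nonneg[OF assms(1)] by (simp add: K_def)
  obtain N where N: "\<forall>n\<ge>N. hnorm (X n - a) < e / K" using hlimD[OF assms(2), of "e / K"] e K by auto
  have "hnorm (S (X n) - S a) \<le> e" if "n \<ge> N" for n
  proof -
    have "hnorm (S (X n) - S a) = hnorm (S (X n - a))" by (simp add: bo_diff[OF assms(1)])
    also have "\<dots> \<le> opnorm S * hnorm (X n - a)" by (rule opnorm_bound[OF assms(1)])
    also have "\<dots> \<le> K * hnorm (X n - a)" by (simp add: K_def mult_right_mono)
    also have "\<dots> \<le> e"
    proof -
      have "hnorm (X n - a) < e / K" using N that by blast
      then show ?thesis using K by (simp add: pos_less_divide_eq mult.commute less_imp_le)
    qed
    finally show ?thesis .
  qed
  then show "\<exists>N. \<forall>n\<ge>N. hnorm (S (X n) - S a) \<le> e" by blast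
qed

lemma hlim_const: "hlim (\<lambda>n. a) a"
  by (rule hlimI) auto

lemma hlim_hinner_left: assumes "hlim X a"
  shows "(\<lambda>n. hinner (X n) y) \<longlonglongrightarrow> hinner a y"
proof -
  have "(\<lambda>n. hinner (X n) y - hinner a y) \<longlonglongrightarrow> 0"
  proof (rule Lim_null_comparison)
    show "\<forall>\<^sub>F n in sequentially. norm (hinner (X n) y - hinner a y) \<le> hnorm (X n - a) * hnorm y"
      using cauchy_schwarz[of "X _ - a" y] by (simp add: hinner_diff_left)
    show "(\<lambda>n. hnorm (X n - a) * hnorm y) \<longlonglongrightarrow> 0"
      using assms unfolding hlim_def by (intro tendsto_mult_left_zero)
  qed
  then show ?thesis by (rule LIM_zero_cancel)
qed

lemma hlim_hinner_right: assumes "hlim X a"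
  shows "(\<lambda>n. hinner y (X n)) \<longlonglongrightarrow> hinner y a"
proof -
  have "(\<lambda>n. hinner y (X n) - hinner y a) \<longlonglongrightarrow> 0"
  proof (rule Lim_null_comparison)
    show "\<forall>\<^sub>F n in sequentially. norm (hinner y (X n) - hinner y a) \<le> hnorm y * hnorm (X n - a)"
      using cauchy_schwarz[of y "X _ - a"] by (simp add: hinner_diff_right)
    show "(\<lambda>n. hnorm y * hnorm (X n - a)) \<longlonglongrightarrow> 0"
      using assms unfolding hlim_def by (intro tendsto_mult_right_zero)
  qed
  then show ?thesis by (rule LIM_zero_cancel)
qed

section \<open>Completeness of bounded operators\<close>

lemma opnorm_tri: assumes "bounded_op A" "bounded_op B" "bounded_op C"
  shows "opnorm (\<lambda>x::'a::chilbert. A x - C x) \<le> opnorm (\<lambda>x. A x - B x) + opnorm (\<lambda>x. B x - C x)"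
proof -
  have "opnorm (\<lambda>x. (A x - B x) + (B x - C x)) \<le> opnorm (\<lambda>x. A x - B x) + opnorm (\<lambda>x. B x - C x)"
    by (rule opnorm_add) (simp_all add: bo_diff_op assms)
  then show ?thesis by simp
qed

lemma op_complete:
  fixes X :: "nat \<Rightarrow> 'a::chilbert \<Rightarrow> 'a"
  assumes b: "\<And>n. bounded_op (X n)"
    and C: "\<And>e. e > 0 \<Longrightarrow> \<exists>N. \<forall>m\<ge>N. \<forall>n\<ge>N. opnorm (\<lambda>x. X m x - X n x) \<le> e"
  shows "\<exists>S. bounded_op S \<and> (\<lambda>n. opnorm (\<lambda>x. X n x - S x)) \<longlonglongrightarrow> 0"
proof -
  have bd: "bounded_op (\<lambda>x. X m x - X n x)" for m n by (simp add: bo_diff_op b)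
  have pw: "hnorm (X m x - X n x) \<le> e * hnorm x" if "opnorm (\<lambda>x. X m x - X n x) \<le> e" for m n x e
    using opnorm_bound[OF bd[of m n], of x] that by (meson hnorm_nonneg mult_right_mono order_trans)
  have ex: "\<exists>L. hlim (\<lambda>n. X n x) L" for x
  proof -
    have "\<exists>L. (\<lambda>n. sqrt (Re (hinner (X n x - L) (X n x - L)))) \<longlonglongrightarrow> 0"
    proof (rule hcomplete, intro allI impI)
      fix e :: real assume e: "e > 0"
      define e' where "e' = e / (hnorm x + 1)"
      have e': "e' > 0" by (simp add: e'_def e add_nonneg_pos)
      obtain N where N: "\<forall>m\<ge>N. \<forall>n\<ge>N. opnorm (\<lambda>x. X m x - X n x) \<le> e'" using C[OF e'] by blast
      have "hnorm (X m x - X n x) < e" if "m \<ge> N" "n \<ge> N" for m n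
      proof -
        have "hnorm (X m x - X n x) \<le> e' * hnorm x" using pw N that by blast
        also have "\<dots> < e' * (hnorm x + 1)" using e' by simp
        also have "\<dots> = e"
        proof -
          have hp: "hnorm x + 1 \<noteq> 0" using hnorm_nonneg[of x] by linarith
          show ?thesis by (simp add: e'_def hp)
        qed
        finally show ?thesis .
      qed
      then show "\<exists>N. \<forall>m\<ge>N. \<forall>n\<ge>N. sqrt (Re (hinner (X m x - X n x) (X m x - X n x))) < e"
        unfolding hnorm_def[symmetric] by blast
    qed
    then show ?thesis unfolding hlim_def hnorm_def .
  qed
  define S where "S x = (SOME L. hlim (\<lambda>n. X n x) L)" for x
  have S: "hlim (\<lambda>n. X n x) (S x)" for x unfolding S_def using ex by (rule someI_ex)
  have Sadd: "S (x + y) = S x + S y" for x y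
  proof -
    have "hlim (\<lambda>n. X n (x + y)) (S x + S y)"
      using hlim_add[OF S[of x] S[of y]] by (simp add: bo_add[OF b])
    then show ?thesis using S hlim_unique by blast
  qed
  have Sscale: "S (a *\<^sub>H x) = a *\<^sub>H S x" for a x
  proof -
    have "hlim (\<lambda>n. X n (a *\<^sub>H x)) (a *\<^sub>H S x)"
      using hlim_bo[OF bo_scale_op[OF bo_id, of a] S[of x]] by (simp add: bo_scale[OF b])
    then show ?thesis using S hlim_unique by blast
  qed
  have unif: "hnorm (X n x - S x) \<le> e * hnorm x"
    if N: "\<forall>m\<ge>N. \<forall>n\<ge>N. opnorm (\<lambda>x. X m x - X n x) \<le> e" and n: "n \<ge> N" for N n e x
  proof -
    have lim: "(\<lambda>m. e * hnorm x + hnorm (X m x - S x)) \<longlonglongrightarrow> e * hnorm x + 0"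
      using S[of x] unfolding hlim_def by (intro tendsto_intros)
    have "\<forall>m\<ge>N. hnorm (X n x - S x) \<le> e * hnorm x + hnorm (X m x - S x)"
    proof (intro allI impI)
      fix m assume m: "m \<ge> N"
      have "hnorm (X n x - S x) \<le> hnorm (X n x - X m x) + hnorm (X m x - S x)" by (rule hnorm_triangle_diff)
      also have "hnorm (X n x - X m x) \<le> e * hnorm x" using pw N n m by blast
      finally show "hnorm (X n x - S x) \<le> e * hnorm x + hnorm (X m x - S x)" by simp
    qed
    then have "hnorm (X n x - S x) \<le> e * hnorm x + 0" by (intro LIMSEQ_le_const[OF lim]) blast
    then show ?thesis by simp
  qed
  obtain N1 where N1: "\<forall>m\<ge>N1. \<forall>n\<ge>N1. opnorm (\<lambda>x. X m x - X n x) \<le> 1" using C[of 1] by auto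
  have bS: "bounded_op S"
  proof (rule bounded_opI[where K="opnorm (X N1) + 1"])
    fix x
    have "S x = X N1 x - (X N1 x - S x)" by simp
    then have "hnorm (S x) \<le> hnorm (X N1 x) + hnorm (X N1 x - S x)" using hnorm_diff_le by metis
    also have "\<dots> \<le> opnorm (X N1) * hnorm x + 1 * hnorm x"
      using opnorm_bound[OF b] unif[OF N1, of N1 x] by (intro add_mono) auto
    finally show "hnorm (S x) \<le> (opnorm (X N1) + 1) * hnorm x" by (simp add: distrib_right)
  qed (simp_all add: Sadd Sscale)
  have "(\<lambda>n. opnorm (\<lambda>x. X n x - S x)) \<longlonglongrightarrow> 0"
  proof (rule to0)
    show "0 \<le> opnorm (\<lambda>x. X n x - S x)" for n by (rule opnorm_nonneg) (simp add: bo_diff_op b bS)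
    fix e :: real assume e: "e > 0"
    obtain N where N: "\<forall>m\<ge>N. \<forall>n\<ge>N. opnorm (\<lambda>x. X m x - X n x) \<le> e" using C[OF e] by blast
    have "opnorm (\<lambda>x. X n x - S x) \<le> e" if "n \<ge> N" for n
      by (rule opnorm_le') (use e unif[OF N that] in auto)
    then show "\<exists>N. \<forall>n\<ge>N. opnorm (\<lambda>x. X n x - S x) \<le> e" by blast
  qed
  then show ?thesis using bS by blast
qed

section \<open>Polynomial approximation\<close>

definition uconv :: "(nat \<Rightarrow> real poly) \<Rightarrow> (real \<Rightarrow> real) \<Rightarrow> real set \<Rightarrow> bool" where
  "uconv P f I \<longleftrightarrow> (\<forall>e>0. \<exists>N. \<forall>n\<ge>N. \<forall>t\<in>I. \<bar>poly (P n) t - f t\<bar> < e)"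

lemma fcalc_uconv: "fcalc f T = (THE S. bounded_op S \<and>
     (\<forall>P. uconv P f {spec_lo T..spec_hi T} \<longrightarrow> (\<lambda>n. opnorm (\<lambda>x. poly_op (P n) T x - S x)) \<longlonglongrightarrow> 0))"
  by (simp add: fcalc_def uconv_def)

lemma weierstrass_poly:
  fixes f :: "real \<Rightarrow> real"
  assumes "compact I" "continuous_on I f" "e > 0"
  shows "\<exists>Q. \<forall>t\<in>I. \<bar>f t - poly Q t\<bar> < e"
proof -
  obtain g where g: "real_polynomial_function g" "\<And>x. x \<in> I \<Longrightarrow> \<bar>f x - g x\<bar> < e"
    using Stone_Weierstrass_real_polynomial_function[OF assms] by blast
  obtain a n where an: "g = (\<lambda>x. \<Sum>i\<le>n. a i * x^i)" using real_polynomial_function_imp_sum[OF g(1)] by blast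
  have "g t = poly (\<Sum>i\<le>n. monom (a i) i) t" for t by (simp add: an poly_sum poly_monom)
  then show ?thesis using g(2) by metis
qed

lemma approx_above:
  fixes f :: "real \<Rightarrow> real"
  assumes "compact I" "continuous_on I f"
  shows "\<exists>P. uconv P f I \<and> (\<forall>n. \<forall>t\<in>I. f t \<le> poly (P n) t)"
proof -
  have "\<forall>n. \<exists>Q. \<forall>t\<in>I. \<bar>f t - poly Q t\<bar> < 1 / (real n + 1)"
    using weierstrass_poly[OF assms] by simp
  then obtain Q where Q: "\<And>n t. t \<in> I \<Longrightarrow> \<bar>f t - poly (Q n) t\<bar> < 1 / (real n + 1)" by metis
  define P where "P n = Q n + [:1 / (real n + 1):]" for n
  have above: "\<forall>n. \<forall>t\<in>I. f t \<le> poly (P n) t"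
  proof (intro allI ballI)
    fix n t assume "t \<in> I"
    then show "f t \<le> poly (P n) t" using Q[of t n] unfolding P_def by (simp add: abs_less_iff)
  qed
  have "uconv P f I" unfolding uconv_def
  proof (intro allI impI)
    fix e :: real assume e: "e > 0"
    obtain N where N: "inverse (real (Suc N)) < e / 2" using reals_Archimedean[of "e/2"] e by auto
    have "\<bar>poly (P n) t - f t\<bar> < e" if "n \<ge> N" "t \<in> I" for n t
    proof -
      have "1 / (real n + 1) \<le> 1 / (real N + 1)" using that by (simp add: frac_le)
      also have "\<dots> < e / 2" using N by (simp add: inverse_eq_divide add.commute)
      finally have h: "1 / (real n + 1) < e / 2" .
      have "\<bar>poly (P n) t - f t\<bar> = \<bar>(poly (Q n) t - f t) + 1 / (real n + 1)\<bar>"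
        by (simp add: P_def algebra_simps)
      also have "\<dots> \<le> \<bar>poly (Q n) t - f t\<bar> + \<bar>1 / (real n + 1)\<bar>" by (rule abs_triangle_ineq)
      also have "\<dots> = \<bar>poly (Q n) t - f t\<bar> + 1 / (real n + 1)" by simp
      also have "\<dots> < e"
      proof -
        have q: "\<bar>poly (Q n) t - f t\<bar> < 1 / (real n + 1)" using Q[OF that(2), of n] by (simp add: abs_minus_commute)
        then show ?thesis using h by linarith
      qed
      finally show ?thesis .
    qed
    then show "\<exists>N. \<forall>n\<ge>N. \<forall>t\<in>I. \<bar>poly (P n) t - f t\<bar> < e" by blast
  qed
  then show ?thesis using above by blast
qed

lemma posop_spec_lo: assumes "posop S" shows "spec_lo S = 0"
  unfolding spec_lo_qset
proof (rule cInf_eq_minimum)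
  show "0 \<in> qset S" by (rule qset_ne)
  fix y assume "y \<in> qset S" then show "0 \<le> y" using assms by (auto simp: qset_def posop_def)
qed

context
  fixes T :: "'a::chilbert \<Rightarrow> 'a"
  assumes bT: "bounded_op T" and sT: "selfadjoint T"
begin

lemma poly_op_dist:
  assumes "\<And>t. t \<in> {spec_lo T..spec_hi T} \<Longrightarrow> \<bar>poly P t - poly Q t\<bar> \<le> M"
  shows "opnorm (\<lambda>x. poly_op P T x - poly_op Q T x) \<le> M"
proof -
  have "(\<lambda>x. poly_op P T x - poly_op Q T x) = poly_op (P - Q) T" by (rule ext) (simp add: poly_op_diff)
  moreover have "opnorm (poly_op (P - Q) T) \<le> M" by (rule poly_op_norm[OF bT sT]) (use assms in auto)
  ultimately show ?thesis by simp
qed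

lemma uconv_cauchy:
  assumes "uconv P f {spec_lo T..spec_hi T}" "e > 0"
  shows "\<exists>N. \<forall>m\<ge>N. \<forall>n\<ge>N. opnorm (\<lambda>x. poly_op (P m) T x - poly_op (P n) T x) \<le> e"
proof -
  obtain N where N: "\<forall>n\<ge>N. \<forall>t\<in>{spec_lo T..spec_hi T}. \<bar>poly (P n) t - f t\<bar> < e/2"
    using assms unfolding uconv_def by (meson half_gt_zero)
  have "opnorm (\<lambda>x. poly_op (P m) T x - poly_op (P n) T x) \<le> e" if "m \<ge> N" "n \<ge> N" for m n
  proof (rule poly_op_dist)
    fix t assume t: "t \<in> {spec_lo T..spec_hi T}"
    have "\<bar>poly (P m) t - f t\<bar> < e/2" "\<bar>poly (P n) t - f t\<bar> < e/2" using N that t by auto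
    then show "\<bar>poly (P m) t - poly (P n) t\<bar> \<le> e" by linarith
  qed
  then show ?thesis by blast
qed

lemma fcalc_prop:
  assumes cf: "continuous_on {spec_lo T..spec_hi T} f"
  shows "bounded_op (fcalc f T) \<and> (\<forall>P. uconv P f {spec_lo T..spec_hi T} \<longrightarrow>
           (\<lambda>n. opnorm (\<lambda>x. poly_op (P n) T x - fcalc f T x)) \<longlonglongrightarrow> 0)"
proof -
  let ?I = "{spec_lo T..spec_hi T}"
  obtain P0 where P0: "uconv P0 f ?I" using approx_above[OF compact_Icc cf] by blast
  have bP: "bounded_op (poly_op P T)" for P by (rule poly_op_bounded[OF bT])
  obtain S where bS: "bounded_op S" and limS: "(\<lambda>n. opnorm (\<lambda>x. poly_op (P0 n) T x - S x)) \<longlonglongrightarrow> 0"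
    using op_complete[of "\<lambda>n. poly_op (P0 n) T"] bP uconv_cauchy[OF P0] by blast
  have propS: "(\<lambda>n. opnorm (\<lambda>x. poly_op (P n) T x - S x)) \<longlonglongrightarrow> 0" if P: "uconv P f ?I" for P
  proof (rule to0)
    show "0 \<le> opnorm (\<lambda>x. poly_op (P n) T x - S x)" for n by (rule opnorm_nonneg) (simp add: bo_diff_op bP bS)
    fix e :: real assume e: "e > 0"
    obtain N1 where N1: "\<forall>n\<ge>N1. \<forall>t\<in>?I. \<bar>poly (P n) t - f t\<bar> < e/4"
      using P e unfolding uconv_def by (meson zero_less_divide_iff zero_less_numeral)
    obtain N2 where N2: "\<forall>n\<ge>N2. \<forall>t\<in>?I. \<bar>poly (P0 n) t - f t\<bar> < e/4"
      using P0 e unfolding uconv_def by (meson zero_less_divide_iff zero_less_numeral)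
    obtain N3 where N3: "\<forall>n\<ge>N3. opnorm (\<lambda>x. poly_op (P0 n) T x - S x) < e/2"
      using to0D[OF limS, of "e/2"] e by auto
    define m where "m = max N2 N3"
    have "opnorm (\<lambda>x. poly_op (P n) T x - S x) \<le> e" if n: "n \<ge> N1" for n
    proof -
      have "opnorm (\<lambda>x. poly_op (P n) T x - S x) \<le>
            opnorm (\<lambda>x. poly_op (P n) T x - poly_op (P0 m) T x) + opnorm (\<lambda>x. poly_op (P0 m) T x - S x)"
        by (rule opnorm_tri) (simp_all add: bP bS)
      also have "opnorm (\<lambda>x. poly_op (P n) T x - poly_op (P0 m) T x) \<le> e/2"
      proof (rule poly_op_dist)
        fix t assume t: "t \<in> ?I"
        have "\<bar>poly (P n) t - f t\<bar> < e/4" "\<bar>poly (P0 m) t - f t\<bar> < e/4" using N1 N2 n t by (auto simp: m_def)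
        then show "\<bar>poly (P n) t - poly (P0 m) t\<bar> \<le> e/2" by linarith
      qed
      also have "opnorm (\<lambda>x. poly_op (P0 m) T x - S x) < e/2" using N3 by (simp add: m_def)
      finally show ?thesis by simp
    qed
    then show "\<exists>N. \<forall>n\<ge>N. opnorm (\<lambda>x. poly_op (P n) T x - S x) \<le> e" by blast
  qed
  have uniq: "S' = S" if bS': "bounded_op S'"
    and pS': "\<forall>P. uconv P f ?I \<longrightarrow> (\<lambda>n. opnorm (\<lambda>x. poly_op (P n) T x - S' x)) \<longlonglongrightarrow> 0" for S'
  proof -
    have l1: "(\<lambda>n. opnorm (\<lambda>x. poly_op (P0 n) T x - S' x) + opnorm (\<lambda>x. poly_op (P0 n) T x - S x)) \<longlonglongrightarrow> 0 + 0"
      using pS' P0 limS by (intro tendsto_add) auto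
    have "\<forall>n. opnorm (\<lambda>x. S' x - S x) \<le> opnorm (\<lambda>x. poly_op (P0 n) T x - S' x) + opnorm (\<lambda>x. poly_op (P0 n) T x - S x)"
    proof
      fix n
      have "opnorm (\<lambda>x. S' x - S x) \<le> opnorm (\<lambda>x. S' x - poly_op (P0 n) T x) + opnorm (\<lambda>x. poly_op (P0 n) T x - S x)"
        by (rule opnorm_tri) (simp_all add: bP bS bS')
      then show "opnorm (\<lambda>x. S' x - S x) \<le> opnorm (\<lambda>x. poly_op (P0 n) T x - S' x) + opnorm (\<lambda>x. poly_op (P0 n) T x - S x)"
        by (simp add: opnorm_diff_commute[of S'])
    qed
    then have "opnorm (\<lambda>x. S' x - S x) \<le> 0 + 0" by (intro LIMSEQ_le_const[OF l1]) blast
    then have "S' x - S x = 0" for x by (intro opnorm_zero_imp) (simp_all add: bo_diff_op bS bS')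
    then show ?thesis by (intro ext) simp
  qed
  have "fcalc f T = S"
    unfolding fcalc_uconv
  proof (rule the_equality)
    show "bounded_op S \<and> (\<forall>P. uconv P f ?I \<longrightarrow> (\<lambda>n. opnorm (\<lambda>x. poly_op (P n) T x - S x)) \<longlonglongrightarrow> 0)"
      using bS propS by blast
  next
    fix S' assume "bounded_op S' \<and> (\<forall>P. uconv P f ?I \<longrightarrow> (\<lambda>n. opnorm (\<lambda>x. poly_op (P n) T x - S' x)) \<longlonglongrightarrow> 0)"
    then show "S' = S" using uniq by blast
  qed
  then show ?thesis using bS propS by simp
qed

lemma fcalc_bounded: "continuous_on {spec_lo T..spec_hi T} f \<Longrightarrow> bounded_op (fcalc f T)"
  using fcalc_prop by blast

lemma fcalc_hlim:
  assumes cf: "continuous_on {spec_lo T..spec_hi T} f" and P: "uconv P f {spec_lo T..spec_hi T}"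
  shows "hlim (\<lambda>n. poly_op (P n) T x) (fcalc f T x)"
proof -
  have bd: "bounded_op (\<lambda>x. poly_op (P n) T x - fcalc f T x)" for n
    by (simp add: bo_diff_op poly_op_bounded bT fcalc_bounded cf)
  have lim: "(\<lambda>n. opnorm (\<lambda>x. poly_op (P n) T x - fcalc f T x)) \<longlonglongrightarrow> 0" using fcalc_prop[OF cf] P by blast
  show ?thesis unfolding hlim_def
  proof (rule Lim_null_comparison)
    show "\<forall>\<^sub>F n in sequentially. norm (hnorm (poly_op (P n) T x - fcalc f T x))
            \<le> opnorm (\<lambda>x. poly_op (P n) T x - fcalc f T x) * hnorm x"
      using opnorm_bound[OF bd] by simp
    show "(\<lambda>n. opnorm (\<lambda>x. poly_op (P n) T x - fcalc f T x) * hnorm x) \<longlonglongrightarrow> 0"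
      using lim by (rule tendsto_mult_left_zero)
  qed
qed

lemma fcalc_approx:
  assumes cf: "continuous_on {spec_lo T..spec_hi T} f"
  shows "\<exists>P. uconv P f {spec_lo T..spec_hi T} \<and> (\<forall>n. \<forall>t\<in>{spec_lo T..spec_hi T}. f t \<le> poly (P n) t)"
  using approx_above[OF compact_Icc cf] .

lemma fcalc_selfadjoint:
  assumes cf: "continuous_on {spec_lo T..spec_hi T} f"
  shows "selfadjoint (fcalc f T)"
  unfolding selfadjoint_def
proof (intro allI)
  fix x y
  obtain P where P: "uconv P f {spec_lo T..spec_hi T}" using fcalc_approx[OF cf] by blast
  have l1: "(\<lambda>n. hinner (poly_op (P n) T x) y) \<longlonglongrightarrow> hinner (fcalc f T x) y"
    by (rule hlim_hinner_left[OF fcalc_hlim[OF cf P]])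
  have l2: "(\<lambda>n. hinner x (poly_op (P n) T y)) \<longlonglongrightarrow> hinner x (fcalc f T y)"
    by (rule hlim_hinner_right[OF fcalc_hlim[OF cf P]])
  have "(\<lambda>n. hinner (poly_op (P n) T x) y) = (\<lambda>n. hinner x (poly_op (P n) T y))"
    using poly_op_selfadjoint[OF sT] by (simp add: selfadjoint_def)
  then show "hinner (fcalc f T x) y = hinner x (fcalc f T y)" using l1 l2 LIMSEQ_unique by metis
qed

lemma fcalc_posop:
  assumes cf: "continuous_on {spec_lo T..spec_hi T} f"
    and f0: "\<And>t. t \<in> {spec_lo T..spec_hi T} \<Longrightarrow> 0 \<le> f t"
  shows "posop (fcalc f T)"
  unfolding posop_def
proof
  fix x
  obtain P where P: "uconv P f {spec_lo T..spec_hi T}"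
    and above: "\<forall>n. \<forall>t\<in>{spec_lo T..spec_hi T}. f t \<le> poly (P n) t"
    using fcalc_approx[OF cf] by blast
  have pos: "0 \<le> Re (hinner x (poly_op (P n) T x))" for n
  proof -
    have "posop (poly_op (P n) T)"
      by (rule nonneg_posop[OF bT sT]) (metis above f0 atLeastAtMost_iff order_trans)
    then show ?thesis by (simp add: posop_def)
  qed
  have "(\<lambda>n. Re (hinner x (poly_op (P n) T x))) \<longlonglongrightarrow> Re (hinner x (fcalc f T x))"
    by (intro tendsto_Re hlim_hinner_right fcalc_hlim[OF cf P])
  then show "0 \<le> Re (hinner x (fcalc f T x))" using pos by (intro LIMSEQ_le_const) auto
qed

lemma fcalc_poly: "fcalc (poly Q) T = poly_op Q T"
proof -
  have cf: "continuous_on {spec_lo T..spec_hi T} (poly Q)" by (intro continuous_intros)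
  have "uconv (\<lambda>n. Q) (poly Q) {spec_lo T..spec_hi T}" by (simp add: uconv_def)
  then have "hlim (\<lambda>n. poly_op Q T x) (fcalc (poly Q) T x)" for x using fcalc_hlim[OF cf] by blast
  then have "fcalc (poly Q) T x = poly_op Q T x" for x using hlim_const hlim_unique by metis
  then show ?thesis by (intro ext)
qed

lemma fcalc_cong:
  assumes "\<And>t. t \<in> {spec_lo T..spec_hi T} \<Longrightarrow> f t = g t"
  shows "fcalc f T = fcalc g T"
proof -
  have "uconv P f {spec_lo T..spec_hi T} = uconv P g {spec_lo T..spec_hi T}" for P
  proof -
    have "(\<forall>t\<in>{spec_lo T..spec_hi T}. \<bar>poly (P n) t - f t\<bar> < e) =
          (\<forall>t\<in>{spec_lo T..spec_hi T}. \<bar>poly (P n) t - g t\<bar> < e)" for n e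
      using assms by auto
    then show ?thesis unfolding uconv_def by simp
  qed
  then show ?thesis unfolding fcalc_uconv by simp
qed

lemma fcalc_add_poly:
  assumes cg: "continuous_on {spec_lo T..spec_hi T} g"
  shows "fcalc (\<lambda>t. g t + poly Q t) T x = fcalc g T x + poly_op Q T x"
proof -
  let ?I = "{spec_lo T..spec_hi T}"
  obtain P where P: "uconv P g ?I" using fcalc_approx[OF cg] by blast
  have cg': "continuous_on ?I (\<lambda>t. g t + poly Q t)" by (intro continuous_intros cg)
  have P': "uconv (\<lambda>n. P n + Q) (\<lambda>t. g t + poly Q t) ?I" using P by (simp add: uconv_def)
  have h1: "hlim (\<lambda>n. poly_op (P n + Q) T x) (fcalc (\<lambda>t. g t + poly Q t) T x)"
    by (rule fcalc_hlim[OF cg' P'])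
  have "hlim (\<lambda>n. poly_op (P n) T x + poly_op Q T x) (fcalc g T x + poly_op Q T x)"
    by (rule hlim_add[OF fcalc_hlim[OF cg P] hlim_const])
  then show ?thesis using h1 hlim_unique by (metis (no_types, lifting) poly_op_add ext)
qed

lemma cont_bound:
  fixes f :: "real \<Rightarrow> real"
  assumes "continuous_on {a..b::real} f"
  obtains B where "B \<ge> 0" "\<And>t. t \<in> {a..b} \<Longrightarrow> \<bar>f t\<bar> \<le> B"
proof -
  have "bounded (f ` {a..b})" by (intro compact_imp_bounded compact_continuous_image assms compact_Icc)
  then obtain B where "\<forall>y\<in>f ` {a..b}. \<bar>y\<bar> \<le> B" by (auto simp: bounded_real)
  then have B: "\<And>t. t \<in> {a..b} \<Longrightarrow> \<bar>f t\<bar> \<le> B" by blast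
  show ?thesis
  proof (rule that[of "max B 0"])
    fix t assume "t \<in> {a..b}" then show "\<bar>f t\<bar> \<le> max B 0" using B by (meson le_max_iff_disj)
  qed simp
qed

lemma uconv_mult:
  assumes cf: "continuous_on {spec_lo T..spec_hi T} f" and cg: "continuous_on {spec_lo T..spec_hi T} g"
    and P: "uconv P f {spec_lo T..spec_hi T}" and Q: "uconv Q g {spec_lo T..spec_hi T}"
  shows "uconv (\<lambda>n. P n * Q n) (\<lambda>t. f t * g t) {spec_lo T..spec_hi T}"
  unfolding uconv_def
proof (intro allI impI)
  let ?I = "{spec_lo T..spec_hi T}"
  fix e :: real assume e: "e > 0"
  obtain Bf where Bf: "Bf \<ge> 0" "\<And>t. t \<in> ?I \<Longrightarrow> \<bar>f t\<bar> \<le> Bf" using cont_bound[OF cf] by blast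
  obtain Bg where Bg: "Bg \<ge> 0" "\<And>t. t \<in> ?I \<Longrightarrow> \<bar>g t\<bar> \<le> Bg" using cont_bound[OF cg] by blast
  define d where "d = min 1 (e / (Bf + Bg + 2))"
  have d: "d > 0" "d \<le> 1" "d * (Bf + Bg + 1) < e"
  proof -
    show "d > 0" "d \<le> 1" using e Bf Bg by (auto simp: d_def)
    have "d * (Bf + Bg + 1) \<le> e / (Bf + Bg + 2) * (Bf + Bg + 1)"
      using Bf Bg by (intro mult_right_mono) (auto simp: d_def)
    also have "\<dots> < e / (Bf + Bg + 2) * (Bf + Bg + 2)"
      using Bf Bg e by (intro mult_strict_left_mono) auto
    also have "\<dots> = e" using Bf Bg by simp
    finally show "d * (Bf + Bg + 1) < e" .
  qed
  obtain N1 where N1: "\<forall>n\<ge>N1. \<forall>t\<in>?I. \<bar>poly (P n) t - f t\<bar> < d" using P d unfolding uconv_def by blast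
  obtain N2 where N2: "\<forall>n\<ge>N2. \<forall>t\<in>?I. \<bar>poly (Q n) t - g t\<bar> < d" using Q d unfolding uconv_def by blast
  have "\<bar>poly (P n * Q n) t - f t * g t\<bar> < e" if "n \<ge> max N1 N2" "t \<in> ?I" for n t
  proof -
    let ?p = "poly (P n) t" and ?q = "poly (Q n) t"
    have p: "\<bar>?p - f t\<bar> < d" and q: "\<bar>?q - g t\<bar> < d" using N1 N2 that by auto
    have qb: "\<bar>?q\<bar> \<le> Bg + 1" using q d Bg(2)[OF that(2)] by linarith
    have "\<bar>?p * ?q - f t * g t\<bar> = \<bar>(?p - f t) * ?q + f t * (?q - g t)\<bar>" by (simp add: algebra_simps)
    also have "\<dots> \<le> \<bar>?p - f t\<bar> * \<bar>?q\<bar> + \<bar>f t\<bar> * \<bar>?q - g t\<bar>" by (rule order_trans[OF abs_triangle_ineq]) (simp add: abs_mult)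
    also have "\<dots> \<le> d * (Bg + 1) + Bf * d"
      using p q qb Bf(2)[OF that(2)] by (intro add_mono mult_mono) auto
    also have "\<dots> = d * (Bf + Bg + 1)" by (simp add: algebra_simps)
    also have "\<dots> < e" by (rule d(3))
    finally show ?thesis by simp
  qed
  then show "\<exists>N. \<forall>n\<ge>N. \<forall>t\<in>?I. \<bar>poly (P n * Q n) t - f t * g t\<bar> < e" by blast
qed

lemma fcalc_mult:
  assumes cf: "continuous_on {spec_lo T..spec_hi T} f" and cg: "continuous_on {spec_lo T..spec_hi T} g"
  shows "fcalc (\<lambda>t. f t * g t) T x = fcalc f T (fcalc g T x)"
proof -
  let ?I = "{spec_lo T..spec_hi T}"
  obtain P where P: "uconv P f ?I" using fcalc_approx[OF cf] by blast
  obtain Q where Q: "uconv Q g ?I" using fcalc_approx[OF cg] by blast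
  have cfg: "continuous_on ?I (\<lambda>t. f t * g t)" by (intro continuous_intros cf cg)
  have h1: "hlim (\<lambda>n. poly_op (P n * Q n) T x) (fcalc (\<lambda>t. f t * g t) T x)"
    by (rule fcalc_hlim[OF cfg uconv_mult[OF cf cg P Q]])
  obtain Bf where Bf: "Bf \<ge> 0" "\<And>t. t \<in> ?I \<Longrightarrow> \<bar>f t\<bar> \<le> Bf" using cont_bound[OF cf] by blast
  obtain N0 where N0: "\<forall>n\<ge>N0. \<forall>t\<in>?I. \<bar>poly (P n) t - f t\<bar> < 1" using P unfolding uconv_def by fastforce
  have opP: "opnorm (poly_op (P n) T) \<le> Bf + 1" if "n \<ge> N0" for n
  proof (rule poly_op_norm[OF bT sT])
    fix t assume "spec_lo T \<le> t" "t \<le> spec_hi T"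
    then have "t \<in> ?I" by simp
    then show "\<bar>poly (P n) t\<bar> \<le> Bf + 1" using N0 that Bf(2) by fastforce
  qed
  define y where "y = fcalc g T x"
  have hQ: "hlim (\<lambda>n. poly_op (Q n) T x) y" unfolding y_def by (rule fcalc_hlim[OF cg Q])
  have hP: "hlim (\<lambda>n. poly_op (P n) T y) (fcalc f T y)" by (rule fcalc_hlim[OF cf P])
  have h2: "hlim (\<lambda>n. poly_op (P n) T (poly_op (Q n) T x)) (fcalc f T y)"
  proof (rule hlimI)
    fix e :: real assume e: "e > 0"
    obtain N1 where N1: "\<forall>n\<ge>N1. hnorm (poly_op (Q n) T x - y) < e / (2 * (Bf + 1))"
      using hlimD[OF hQ, of "e / (2 * (Bf + 1))"] e Bf by auto
    obtain N2 where N2: "\<forall>n\<ge>N2. hnorm (poly_op (P n) T y - fcalc f T y) < e / 2"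
      using hlimD[OF hP, of "e / 2"] e by auto
    have "hnorm (poly_op (P n) T (poly_op (Q n) T x) - fcalc f T y) \<le> e" if n: "n \<ge> max N0 (max N1 N2)" for n
    proof -
      have bPn: "bounded_op (poly_op (P n) T)" by (rule poly_op_bounded[OF bT])
      have "poly_op (P n) T (poly_op (Q n) T x) - fcalc f T y =
            poly_op (P n) T (poly_op (Q n) T x - y) + (poly_op (P n) T y - fcalc f T y)"
        by (simp add: bo_diff[OF bPn])
      then have "hnorm (poly_op (P n) T (poly_op (Q n) T x) - fcalc f T y) \<le>
            hnorm (poly_op (P n) T (poly_op (Q n) T x - y)) + hnorm (poly_op (P n) T y - fcalc f T y)"
        using hnorm_triangle by metis
      also have "hnorm (poly_op (P n) T (poly_op (Q n) T x - y)) \<le> (Bf + 1) * (e / (2 * (Bf + 1)))"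
      proof -
        have "hnorm (poly_op (P n) T (poly_op (Q n) T x - y)) \<le> opnorm (poly_op (P n) T) * hnorm (poly_op (Q n) T x - y)"
          by (rule opnorm_bound[OF bPn])
        also have "\<dots> \<le> (Bf + 1) * (e / (2 * (Bf + 1)))"
          using opP[of n] N1 n Bf(1) by (intro mult_mono) (auto simp: less_imp_le)
        finally show ?thesis .
      qed
      also have "(Bf + 1) * (e / (2 * (Bf + 1))) = e / 2" using Bf(1) by (simp add: field_simps)
      also have "hnorm (poly_op (P n) T y - fcalc f T y) \<le> e / 2" using N2 n by (simp add: less_imp_le)
      finally show ?thesis by simp
    qed
    then show "\<exists>N. \<forall>n\<ge>N. hnorm (poly_op (P n) T (poly_op (Q n) T x) - fcalc f T y) \<le> e" by blast
  qed
  have "(\<lambda>n. poly_op (P n * Q n) T x) = (\<lambda>n. poly_op (P n) T (poly_op (Q n) T x))"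
    by (simp add: poly_op_mult[OF bT])
  then show ?thesis using h1 h2 hlim_unique unfolding y_def by metis
qed

end

section \<open>Real inequalities\<close>

lemma tangent_powr:
  fixes k x c :: real
  assumes k: "k \<ge> 1" and x: "x \<ge> 0" and c: "c \<ge> 0"
  shows "c powr k + k * c powr (k - 1) * (x - c) \<le> x powr k"
proof (cases "c = 0")
  case True then show ?thesis using x by simp
next
  case False
  then have cp: "c > 0" using c by simp
  show ?thesis
  proof (cases "x = 0")
    case True
    have "c powr (k - 1) * c = c powr (k - 1) * c powr 1" using cp by (simp add: powr_one)
    also have "\<dots> = c powr k" by (simp only: powr_add[symmetric] diff_add_cancel)
    finally have "c powr (k - 1) * c = c powr k" .
    then have "c powr k + k * c powr (k - 1) * (x - c) = (1 - k) * c powr k"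
      using True by (simp add: algebra_simps)
    also have "\<dots> \<le> 0" using k by (simp add: mult_nonpos_nonneg)
    finally show ?thesis using True by simp
  next
    case False
    then have xp: "x > 0" using x by simp
    have "(\<lambda>y. y powr k) x - (\<lambda>y. y powr k) c \<ge> k * c powr (k - 1) * (x - c)"
    proof (rule convex_on_imp_above_tangent[where A = "{0<..}"])
      show "convex_on {0<..} (\<lambda>y. y powr k)" by (rule powr_convex[OF k])
      show "connected {(0::real)<..}" by simp
      show "c \<in> interior {0<..}" using cp by (subst interior_open) auto
      show "x \<in> {0<..}" using xp by simp
      show "((\<lambda>y. y powr k) has_field_derivative k * c powr (k - 1)) (at c within {0<..})"
        using has_real_derivative_powr[OF cp] by (rule has_field_derivative_at_within)
    qed
    then show ?thesis by simp
  qed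
qed

lemma convex_mid_powr:
  fixes k y1 y2 :: real
  assumes k: "k \<ge> 1" and y: "y1 \<ge> 0" "y2 \<ge> 0"
  shows "((y1 + y2) / 2) powr k \<le> (y1 powr k + y2 powr k) / 2"
proof -
  define m where "m = (y1 + y2) / 2"
  have m: "m \<ge> 0" using y by (simp add: m_def)
  have "m powr k + k * m powr (k - 1) * (y1 - m) \<le> y1 powr k" by (rule tangent_powr[OF k y(1) m])
  moreover have "m powr k + k * m powr (k - 1) * (y2 - m) \<le> y2 powr k" by (rule tangent_powr[OF k y(2) m])
  moreover have "(y1 - m) + (y2 - m) = 0" by (simp add: m_def)
  moreover have "k * m powr (k - 1) * (y1 - m) + k * m powr (k - 1) * (y2 - m)
      = 0" by (simp add: m_def algebra_simps)
  ultimately have "2 * m powr k \<le> y1 powr k + y2 powr k"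
    by linarith
  then show ?thesis by (simp add: m_def)
qed

lemma sq_powr: fixes x k :: real assumes "x \<ge> 0" shows "(x^2) powr (k/2) = x powr k"
proof (cases "x = 0")
  case True then show ?thesis by simp
next
  case False
  then have "x > 0" using assms by simp
  then have "x^2 = x powr 2" using powr_realpow[of x 2] by simp
  then show ?thesis by (simp add: powr_powr)
qed

lemma young0:
  fixes a b al be :: real
  assumes "a \<ge> 0" "b \<ge> 0" "al \<ge> 0" "be \<ge> 0" "al + be = 1"
  shows "a powr al * b powr be \<le> al * a + be * b"
proof (cases "a = 0 \<or> b = 0")
  case True then show ?thesis using assms by auto
next
  case False then show ?thesis using Youngs_inequality_0[of al be a b] assms by auto
qed

lemma holder2:
  fixes p q a1 a2 b1 b2 :: real
  assumes pq: "p > 1" "q > 1" "1/p + 1/q = 1"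
    and nn: "a1 \<ge> 0" "a2 \<ge> 0" "b1 \<ge> 0" "b2 \<ge> 0"
  shows "a1 powr (1/p) * b1 powr (1/q) + a2 powr (1/p) * b2 powr (1/q)
         \<le> (a1 + a2) powr (1/p) * (b1 + b2) powr (1/q)"
proof (cases "a1 + a2 = 0 \<or> b1 + b2 = 0")
  case True
  then have "(a1 = 0 \<and> a2 = 0) \<or> (b1 = 0 \<and> b2 = 0)" using nn by auto
  then show ?thesis by auto
next
  case False
  define A where "A = a1 + a2"
  define B where "B = b1 + b2"
  have A: "A > 0" and B: "B > 0" using False nn by (auto simp: A_def B_def)
  have pos: "1/p \<ge> 0" "1/q \<ge> 0" using pq by auto
  have y: "(a / A) powr (1/p) * (b / B) powr (1/q) \<le> (1/p) * (a / A) + (1/q) * (b / B)"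
    if "a \<ge> 0" "b \<ge> 0" for a b
    by (rule young0) (use that A B pos pq in auto)
  have e: "a powr (1/p) * b powr (1/q) = A powr (1/p) * B powr (1/q) * ((a / A) powr (1/p) * (b / B) powr (1/q))"
    if "a \<ge> 0" "b \<ge> 0" for a b
  proof -
    have "a = A * (a / A)" "b = B * (b / B)" using A B by auto
    then have "a powr (1/p) * b powr (1/q) = (A * (a / A)) powr (1/p) * (B * (b / B)) powr (1/q)" by simp
    also have "\<dots> = A powr (1/p) * B powr (1/q) * ((a / A) powr (1/p) * (b / B) powr (1/q))"
      by (simp only: powr_mult mult.assoc mult.left_commute)
    finally show ?thesis .
  qed
  have "a1 powr (1/p) * b1 powr (1/q) + a2 powr (1/p) * b2 powr (1/q)
      = A powr (1/p) * B powr (1/q) * ((a1 / A) powr (1/p) * (b1 / B) powr (1/q) + (a2 / A) powr (1/p) * (b2 / B) powr (1/q))"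
    using e[OF nn(1) nn(3)] e[OF nn(2) nn(4)] by (simp add: distrib_left)
  also have "\<dots> \<le> A powr (1/p) * B powr (1/q) * (((1/p) * (a1 / A) + (1/q) * (b1 / B)) + ((1/p) * (a2 / A) + (1/q) * (b2 / B)))"
    using y[OF nn(1) nn(3)] y[OF nn(2) nn(4)] by (intro mult_left_mono add_mono) auto
  also have "((1/p) * (a1 / A) + (1/q) * (b1 / B)) + ((1/p) * (a2 / A) + (1/q) * (b2 / B)) = (1/p) * ((a1 + a2) / A) + (1/q) * ((b1 + b2) / B)"
    by (simp add: algebra_simps add_divide_distrib)
  also have "\<dots> = 1" using A B pq by (simp add: A_def B_def)
  finally show ?thesis by (simp add: A_def B_def)
qed

lemma adjoint_sa: assumes "selfadjoint T" shows "adjoint T = (T::'a::chilbert \<Rightarrow> 'a)"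
proof -
  have ex: "\<exists>S. \<forall>x y. hinner (T x) y = hinner x (S y)" using assms by (auto simp: selfadjoint_def)
  define S where "S = adjoint T"
  have S: "\<forall>x y. hinner (T x) y = hinner x (S y)" unfolding S_def adjoint_def by (rule someI_ex[OF ex])
  have "S y = T y" for y
  proof -
    define d where "d = S y - T y"
    have "hinner d (S y) = hinner d (T y)" using S assms by (simp add: selfadjoint_def)
    then have "hinner d d = 0" by (simp add: d_def hinner_diff_right)
    then have "d = 0" by (rule hinner_eq_zero)
    then show ?thesis by (simp add: d_def)
  qed
  then show ?thesis unfolding S_def by auto
qed

lemma sa_comp: assumes "selfadjoint T" shows "selfadjoint (\<lambda>x::'a::chilbert. T (T x))"
  using assms by (simp add: selfadjoint_def)

lemma poly_op_sq: assumes "bounded_op T" shows "poly_op [:0, 0, 1:] T x = T (T (x::'a::chilbert))"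
proof -
  have e: "[:0, 0, 1:] = [:0, 1:] * [:0, 1::real:]" by (rule poly_ext_eq) (simp add: power2_eq_square)
  show ?thesis by (simp only: e poly_op_mult[OF assms] poly_op_X[OF assms])
qed

context
  fixes T :: "'a::chilbert \<Rightarrow> 'a"
  assumes bT: "bounded_op T" and sT: "selfadjoint T"
begin

lemma absop_eq: "absop T = fcalc abs T"
proof -
  define T2 where "T2 = (\<lambda>x. T (T x))"
  have bT2: "bounded_op T2" unfolding T2_def by (rule bo_comp[OF bT bT])
  have sT2: "selfadjoint T2" unfolding T2_def by (rule sa_comp[OF sT])
  have ab: "absop T = fcalc sqrt T2" by (simp add: absop_def adjoint_sa[OF sT] T2_def)
  define h where "h = spec_hi T2"
  have h0: "0 \<le> h" using spec_hi_ge0[OF bT2] by (simp add: h_def)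
  have nb: "\<bar>Re (hinner x (T x))\<bar> \<le> sqrt h" if "hnorm x \<le> 1" for x
  proof -
    have x2: "hnorm x ^ 2 \<le> 1" using that by (simp add: power_le_one)
    have "Re (hinner x (T2 x)) = hnorm (T x) ^ 2"
      using sT by (simp add: T2_def selfadjoint_def hnorm_sq)
    moreover have "Re (hinner x (T2 x)) \<le> h * hnorm x ^ 2" unfolding h_def by (rule qf_hi[OF bT2])
    ultimately have "hnorm (T x) ^ 2 \<le> h" using x2 h0 by (smt (verit) mult_left_le)
    then have tx: "hnorm (T x) \<le> sqrt h" by (metis real_sqrt_abs real_sqrt_le_mono abs_of_nonneg hnorm_nonneg)
    have "\<bar>Re (hinner x (T x))\<bar> \<le> cmod (hinner x (T x))" by (rule abs_Re_le_cmod)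
    also have "\<dots> \<le> hnorm x * hnorm (T x)" by (rule cauchy_schwarz)
    also have "\<dots> \<le> 1 * hnorm (T x)" using that by (intro mult_right_mono) auto
    finally show ?thesis using tx by simp
  qed
  have hi: "spec_hi T \<le> sqrt h" unfolding spec_hi_qset
    by (rule cSup_least[OF qset_ne(1)]) (use nb in \<open>force simp: qset_def abs_le_iff\<close>)
  have lo: "- sqrt h \<le> spec_lo T" unfolding spec_lo_qset
    by (rule cInf_greatest[OF qset_ne(1)]) (use nb in \<open>force simp: qset_def abs_le_iff\<close>)
  have sqin: "t * t \<in> {spec_lo T2..spec_hi T2}" if "t \<in> {spec_lo T..spec_hi T}" for t
  proof -
    have "\<bar>t\<bar> \<le> sqrt h" using that hi lo by auto
    then have "\<bar>t\<bar> * \<bar>t\<bar> \<le> sqrt h * sqrt h" using h0 by (intro mult_mono) auto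
    then have "t * t \<le> h" using h0 by (simp add: abs_mult[symmetric])
    moreover have "spec_lo T2 \<le> t * t"
    proof -
      have "0 \<le> t * t" by simp
      then show ?thesis using spec_lo_le0[OF bT2] by linarith
    qed
    ultimately show ?thesis by (simp add: h_def)
  qed
  have csq: "continuous_on {spec_lo T2..spec_hi T2} sqrt" by (intro continuous_intros)
  have cab: "continuous_on {spec_lo T..spec_hi T} abs" by (intro continuous_intros)
  obtain P where P: "uconv P sqrt {spec_lo T2..spec_hi T2}" using fcalc_approx[OF bT2 sT2 csq] by blast
  define P' where "P' n = pcompose (P n) [:0, 0, 1:]" for n
  have P': "uconv P' abs {spec_lo T..spec_hi T}" unfolding uconv_def
  proof (intro allI impI)
    fix e :: real assume "e > 0"
    then obtain N where N: "\<forall>n\<ge>N. \<forall>s\<in>{spec_lo T2..spec_hi T2}. \<bar>poly (P n) s - sqrt s\<bar> < e"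
      using P unfolding uconv_def by blast
    have "\<bar>poly (P' n) t - \<bar>t\<bar>\<bar> < e" if "n \<ge> N" "t \<in> {spec_lo T..spec_hi T}" for n t
    proof -
      have "poly (P' n) t = poly (P n) (t * t)" by (simp add: P'_def poly_pcompose)
      moreover have "sqrt (t * t) = \<bar>t\<bar>" by simp
      ultimately show ?thesis using N that sqin by metis
    qed
    then show "\<exists>N. \<forall>n\<ge>N. \<forall>t\<in>{spec_lo T..spec_hi T}. \<bar>poly (P' n) t - \<bar>t\<bar>\<bar> < e" by blast
  qed
  have "fcalc sqrt T2 x = fcalc abs T x" for x
  proof -
    have h1: "hlim (\<lambda>n. poly_op (P n) T2 x) (fcalc sqrt T2 x)" by (rule fcalc_hlim[OF bT2 sT2 csq P])
    have h2: "hlim (\<lambda>n. poly_op (P' n) T x) (fcalc abs T x)" by (rule fcalc_hlim[OF bT sT cab P'])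
    have "poly_op (P' n) T x = poly_op (P n) T2 x" for n
    proof -
      have "poly_op (P' n) T x = poly_op (P n) (poly_op [:0, 0, 1:] T) x"
        by (simp add: P'_def poly_op_pcompose[OF bT])
      also have "poly_op [:0, 0, 1:] T = T2" by (rule ext) (simp add: T2_def poly_op_sq[OF bT])
      finally show ?thesis .
    qed
    then show ?thesis using h1 h2 hlim_unique by (metis (no_types, lifting) ext)
  qed
  then show ?thesis using ab by auto
qed

lemma absop_props: "bounded_op (absop T)" "selfadjoint (absop T)" "posop (absop T)"
proof -
  have cab: "continuous_on {spec_lo T..spec_hi T} abs" by (intro continuous_intros)
  show "bounded_op (absop T)" unfolding absop_eq by (rule fcalc_bounded[OF bT sT cab])
  show "selfadjoint (absop T)" unfolding absop_eq by (rule fcalc_selfadjoint[OF bT sT cab])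
  show "posop (absop T)" unfolding absop_eq by (rule fcalc_posop[OF bT sT cab]) auto
qed

lemma abs_bound: "\<bar>Re (hinner x (T x))\<bar> \<le> Re (hinner x (absop T x))"
proof -
  have cab: "continuous_on {spec_lo T..spec_hi T} abs" by (intro continuous_intros)
  have X: "poly_op [:0, c:] T x = complex_of_real c *\<^sub>H T x" for c
  proof -
    have e: "[:0, c:] = smult c [:0, 1:]" by simp
    show ?thesis by (simp only: e poly_op_smult poly_op_X[OF bT])
  qed
  have p1: "posop (fcalc (\<lambda>t. \<bar>t\<bar> + poly [:0, 1:] t) T)"
    by (rule fcalc_posop[OF bT sT]) (intro continuous_intros, simp)
  have p2: "posop (fcalc (\<lambda>t. \<bar>t\<bar> + poly [:0, -1:] t) T)"
    by (rule fcalc_posop[OF bT sT]) (intro continuous_intros, simp)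
  have e1: "fcalc (\<lambda>t. \<bar>t\<bar> + poly [:0, 1:] t) T x = absop T x + T x"
    using fcalc_add_poly[OF bT sT cab, of "[:0, 1:]" x] by (simp add: absop_eq X hscale_one)
  have e2: "fcalc (\<lambda>t. \<bar>t\<bar> + poly [:0, -1:] t) T x = absop T x - T x"
    using fcalc_add_poly[OF bT sT cab, of "[:0, -1:]" x] by (simp add: absop_eq X hscale_minus_left hscale_one)
  have "0 \<le> Re (hinner x (absop T x + T x))" using p1 e1 by (metis posop_def)
  moreover have "0 \<le> Re (hinner x (absop T x - T x))" using p2 e2 by (metis posop_def)
  ultimately show ?thesis by (simp add: hinner_add_right hinner_diff_right abs_le_iff)
qed

end

lemma jensen:
  fixes S :: "'a::chilbert \<Rightarrow> 'a"
  assumes bS: "bounded_op S" and sS: "selfadjoint S" and pS: "posop S"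
    and k: "k \<ge> 2" and x: "hnorm x = 1"
  shows "hnorm (S x) powr k \<le> Re (hinner x (fcalc (\<lambda>t. t powr k) S x))"
proof -
  have lo: "spec_lo S = 0" by (rule posop_spec_lo[OF pS])
  define s0 where "s0 = hnorm (S x) ^ 2"
  define ka where "ka = k / 2"
  have ka: "ka \<ge> 1" using k by (simp add: ka_def)
  define psi where "psi = s0 powr ka"
  define c where "c = ka * s0 powr (ka - 1)"
  define Q where "Q = [:c * s0 - psi, 0, - c:]"
  have s00: "s0 \<ge> 0" by (simp add: s0_def)
  have cg: "continuous_on {spec_lo S..spec_hi S} (\<lambda>t. t powr k)"
    using k by (intro continuous_on_powr' continuous_intros) (auto simp: lo)
  have nonneg: "0 \<le> t powr k + poly Q t" if "t \<in> {spec_lo S..spec_hi S}" for t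
  proof -
    have t0: "t \<ge> 0" using that lo by simp
    have "psi + c * (t^2 - s0) \<le> (t^2) powr ka"
      unfolding psi_def c_def using tangent_powr[OF ka _ s00, of "t^2"] by (simp add: mult.assoc)
    also have "(t^2) powr ka = t powr k" unfolding ka_def by (rule sq_powr[OF t0])
    finally show ?thesis by (simp add: Q_def power2_eq_square algebra_simps)
  qed
  have cg2: "continuous_on {spec_lo S..spec_hi S} (\<lambda>t. t powr k + poly Q t)"
    by (rule continuous_on_add[OF cg]) (intro continuous_intros)
  have pos: "posop (fcalc (\<lambda>t. t powr k + poly Q t) S)"
    by (rule fcalc_posop[OF bS sS cg2]) (use nonneg in auto)
  have e: "fcalc (\<lambda>t. t powr k + poly Q t) S x = fcalc (\<lambda>t. t powr k) S x + poly_op Q S x"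
    by (rule fcalc_add_poly[OF bS sS cg])
  have pQ: "poly_op Q S x = complex_of_real (c * s0 - psi) *\<^sub>H x + complex_of_real (- c) *\<^sub>H S (S x)"
    by (simp only: Q_def poly_op_pCons[OF bS] poly_op_zero bo_zero[OF bS] of_real_0 hscale_zero_left
        add_0_left add_0_right bo_scale[OF bS])
  have SS: "Re (hinner x (S (S x))) = s0" using sS by (simp add: selfadjoint_def s0_def hnorm_sq)
  have "Re (hinner x (poly_op Q S x)) = - psi"
    using x by (simp add: pQ hinner_add_right hinner_scale_right hinner_self_hnorm SS algebra_simps)
  moreover have "0 \<le> Re (hinner x (fcalc (\<lambda>t. t powr k + poly Q t) S x))" using pos by (simp add: posop_def)
  ultimately have "psi \<le> Re (hinner x (fcalc (\<lambda>t. t powr k) S x))"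
    by (simp add: e hinner_add_right)
  moreover have "psi = hnorm (S x) powr k" unfolding psi_def s0_def ka_def by (rule sq_powr) simp
  ultimately show ?thesis by simp
qed

lemma fpow_props:
  fixes T :: "'a::chilbert \<Rightarrow> 'a" and f :: "real \<Rightarrow> real"
  assumes bT: "bounded_op T" and sT: "selfadjoint T"
    and cf: "continuous_on {0..} f" and f0: "\<forall>t\<ge>0. f t \<ge> 0" and s: "s > 0"
  shows "bounded_op (fpow f s (absop T))" "posop (fpow f s (absop T))"
    "bounded_op (fcalc f (absop T))" "selfadjoint (fcalc f (absop T))" "posop (fcalc f (absop T))"
proof -
  define X where "X = absop T"
  note Xp = absop_props[OF bT sT, folded X_def]
  have loX: "spec_lo X = 0" by (rule posop_spec_lo[OF Xp(3)])
  have cf': "continuous_on {spec_lo X..spec_hi X} f" by (rule continuous_on_subset[OF cf]) (auto simp: loX)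
  define u where "u = fcalc f X"
  show bu: "bounded_op (fcalc f (absop T))" using fcalc_bounded[OF Xp(1) Xp(2) cf'] by (simp add: X_def)
  show su: "selfadjoint (fcalc f (absop T))" using fcalc_selfadjoint[OF Xp(1) Xp(2) cf'] by (simp add: X_def)
  show pu: "posop (fcalc f (absop T))" using fcalc_posop[OF Xp(1) Xp(2) cf'] f0 loX by (simp add: X_def)
  have lou: "spec_lo (fcalc f (absop T)) = 0" by (rule posop_spec_lo[OF pu])
  have cp: "continuous_on {spec_lo (fcalc f (absop T))..spec_hi (fcalc f (absop T))} (\<lambda>t. t powr s)"
    using s by (intro continuous_on_powr' continuous_intros) (auto simp: lou)
  show "bounded_op (fpow f s (absop T))" unfolding fpow_def by (rule fcalc_bounded[OF bu su cp])
  show "posop (fpow f s (absop T))" unfolding fpow_def by (rule fcalc_posop[OF bu su cp]) simp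
qed

lemma key_op:
  fixes T :: "'a::chilbert \<Rightarrow> 'a" and f g :: "real \<Rightarrow> real"
  assumes bT: "bounded_op T" and sT: "selfadjoint T"
    and cf: "continuous_on {0..} f" and cg: "continuous_on {0..} g"
    and f0: "\<forall>t\<ge>0. f t \<ge> 0" and g0: "\<forall>t\<ge>0. g t \<ge> 0" and fg: "\<forall>t\<ge>0. f t * g t = t"
    and r: "r \<ge> 2" and pq: "p > 1" "q > 1" and x: "hnorm x = 1"
  shows "\<bar>Re (hinner x (T x))\<bar> powr r \<le>
           Re (hinner x (fpow f (r * p) (absop T) x)) powr (1/p) *
           Re (hinner x (fpow g (r * q) (absop T) x)) powr (1/q)"
proof -
  define X where "X = absop T"
  note Xp = absop_props[OF bT sT, folded X_def]
  have loX: "spec_lo X = 0" by (rule posop_spec_lo[OF Xp(3)])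
  have cf': "continuous_on {spec_lo X..spec_hi X} f" by (rule continuous_on_subset[OF cf]) (auto simp: loX)
  have cg': "continuous_on {spec_lo X..spec_hi X} g" by (rule continuous_on_subset[OF cg]) (auto simp: loX)
  define u where "u = fcalc f X"
  define v where "v = fcalc g X"
  have rp: "r * p > 0" "r * q > 0" using r pq by auto
  note up = fpow_props[OF bT sT cf f0 rp(1), folded X_def, folded u_def]
  note vp = fpow_props[OF bT sT cg g0 rp(2), folded X_def, folded v_def]
  have uv: "u (v x) = X x"
  proof -
    have "fcalc (\<lambda>t. f t * g t) X x = u (v x)" unfolding u_def v_def by (rule fcalc_mult[OF Xp(1) Xp(2) cf' cg'])
    moreover have "fcalc (\<lambda>t. f t * g t) X = fcalc (poly [:0, 1:]) X"
      by (rule fcalc_cong[OF Xp(1) Xp(2)]) (use fg loX in auto)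
    moreover have "fcalc (poly [:0, 1:]) X x = X x"
      by (simp add: fcalc_poly[OF Xp(1) Xp(2)] poly_op_X[OF Xp(1)])
    ultimately show ?thesis by simp
  qed
  have "\<bar>Re (hinner x (T x))\<bar> \<le> Re (hinner x (X x))" unfolding X_def by (rule abs_bound[OF bT sT])
  also have "hinner x (X x) = hinner (u x) (v x)" using uv up(4) by (simp add: selfadjoint_def)
  also have "Re (hinner (u x) (v x)) \<le> hnorm (u x) * hnorm (v x)"
    using abs_Re_le_cmod[of "hinner (u x) (v x)"] cauchy_schwarz[of "u x" "v x"] by linarith
  finally have b1: "\<bar>Re (hinner x (T x))\<bar> \<le> hnorm (u x) * hnorm (v x)" .
  have "r * 1 \<le> r * p" "r * 1 \<le> r * q" using r pq by (intro mult_left_mono; simp)+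
  then have rp2: "r * p \<ge> 2" "r * q \<ge> 2" using r by linarith+
  define al where "al = Re (hinner x (fpow f (r * p) (absop T) x))"
  define be where "be = Re (hinner x (fpow g (r * q) (absop T) x))"
  have J1: "hnorm (u x) powr (r * p) \<le> al"
    unfolding al_def fpow_def X_def[symmetric] u_def[symmetric] by (rule jensen[OF up(3) up(4) up(5) rp2(1) x])
  have J2: "hnorm (v x) powr (r * q) \<le> be"
    unfolding be_def fpow_def X_def[symmetric] v_def[symmetric] by (rule jensen[OF vp(3) vp(4) vp(5) rp2(2) x])
  have e1: "hnorm (u x) powr r = (hnorm (u x) powr (r * p)) powr (1/p)" using pq by (simp add: powr_powr)
  have e2: "hnorm (v x) powr r = (hnorm (v x) powr (r * q)) powr (1/q)" using pq by (simp add: powr_powr)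
  have "\<bar>Re (hinner x (T x))\<bar> powr r \<le> (hnorm (u x) * hnorm (v x)) powr r"
    using b1 r by (intro powr_mono2) auto
  also have "\<dots> = hnorm (u x) powr r * hnorm (v x) powr r" by (simp add: powr_mult)
  also have "\<dots> \<le> al powr (1/p) * be powr (1/q)"
    unfolding e1 e2 using J1 J2 pq by (intro mult_mono powr_mono2) auto
  finally show ?thesis by (simp add: al_def be_def)
qed

lemma combine:
  fixes T1 T2 :: "'a::chilbert \<Rightarrow> 'a" and f1 g1 f2 g2 :: "real \<Rightarrow> real"
  assumes bT1: "bounded_op T1" and sT1: "selfadjoint T1" and bT2: "bounded_op T2" and sT2: "selfadjoint T2"
    and c1: "continuous_on {0..} f1" "continuous_on {0..} g1"
    and c2: "continuous_on {0..} f2" "continuous_on {0..} g2"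
    and nn: "\<forall>t\<ge>0. f1 t \<ge> 0 \<and> g1 t \<ge> 0 \<and> f2 t \<ge> 0 \<and> g2 t \<ge> 0"
    and fg1: "\<forall>t\<ge>0. f1 t * g1 t = t" and fg2: "\<forall>t\<ge>0. f2 t * g2 t = t"
    and r: "r \<ge> 2" and pq: "p > 1" "q > 1" "1/p + 1/q = 1" and x: "hnorm x = 1"
  shows "((Re (hinner x (T1 x)) ^ 2 + Re (hinner x (T2 x)) ^ 2) / 2) powr (r / 2) \<le> 1 / 2
           * opnorm (\<lambda>x. fpow f1 (r * p) (absop T1) x + fpow f2 (r * p) (absop T2) x) powr (1 / p)
           * opnorm (\<lambda>x. fpow g1 (r * q) (absop T1) x + fpow g2 (r * q) (absop T2) x) powr (1 / q)"
proof -
  define a where "a = Re (hinner x (T1 x))"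
  define b where "b = Re (hinner x (T2 x))"
  define F1 where "F1 = fpow f1 (r * p) (absop T1)"
  define F2 where "F2 = fpow f2 (r * p) (absop T2)"
  define G1 where "G1 = fpow g1 (r * q) (absop T1)"
  define G2 where "G2 = fpow g2 (r * q) (absop T2)"
  have rp: "r * p > 0" "r * q > 0" using r pq by auto
  have f10: "\<forall>t\<ge>0. f1 t \<ge> 0" and g10: "\<forall>t\<ge>0. g1 t \<ge> 0" and f20: "\<forall>t\<ge>0. f2 t \<ge> 0"
    and g20: "\<forall>t\<ge>0. g2 t \<ge> 0" using nn by auto
  note F1p = fpow_props[OF bT1 sT1 c1(1) f10 rp(1), folded F1_def]
  note F2p = fpow_props[OF bT2 sT2 c2(1) f20 rp(1), folded F2_def]
  note G1p = fpow_props[OF bT1 sT1 c1(2) g10 rp(2), folded G1_def]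
  note G2p = fpow_props[OF bT2 sT2 c2(2) g20 rp(2), folded G2_def]
  define a1 where "a1 = Re (hinner x (F1 x))"
  define a2 where "a2 = Re (hinner x (F2 x))"
  define b1 where "b1 = Re (hinner x (G1 x))"
  define b2 where "b2 = Re (hinner x (G2 x))"
  have nn2: "a1 \<ge> 0" "a2 \<ge> 0" "b1 \<ge> 0" "b2 \<ge> 0"
    using F1p(2) F2p(2) G1p(2) G2p(2) by (auto simp: posop_def a1_def a2_def b1_def b2_def)
  have k1: "\<bar>a\<bar> powr r \<le> a1 powr (1/p) * b1 powr (1/q)"
    unfolding a_def a1_def b1_def F1_def G1_def
    by (rule key_op[OF bT1 sT1 c1 f10 g10 fg1 r pq(1,2) x])
  have k2: "\<bar>b\<bar> powr r \<le> a2 powr (1/p) * b2 powr (1/q)"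
    unfolding b_def a2_def b2_def F2_def G2_def
    by (rule key_op[OF bT2 sT2 c2 f20 g20 fg2 r pq(1,2) x])
  have r2: "r / 2 \<ge> 1" using r by simp
  have "((a^2 + b^2) / 2) powr (r / 2) \<le> ((a^2) powr (r/2) + (b^2) powr (r/2)) / 2"
    by (rule convex_mid_powr[OF r2]) auto
  also have "(a^2) powr (r/2) = \<bar>a\<bar> powr r" using sq_powr[of "\<bar>a\<bar>" r] by simp
  also have "(b^2) powr (r/2) = \<bar>b\<bar> powr r" using sq_powr[of "\<bar>b\<bar>" r] by simp
  also have "(\<bar>a\<bar> powr r + \<bar>b\<bar> powr r) / 2 \<le> (a1 powr (1/p) * b1 powr (1/q) + a2 powr (1/p) * b2 powr (1/q)) / 2"
    using k1 k2 by simp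
  also have "a1 powr (1/p) * b1 powr (1/q) + a2 powr (1/p) * b2 powr (1/q) \<le> (a1 + a2) powr (1/p) * (b1 + b2) powr (1/q)"
    by (rule holder2[OF pq nn2])
  also have "(a1 + a2) powr (1/p) * (b1 + b2) powr (1/q) \<le>
      opnorm (\<lambda>x. F1 x + F2 x) powr (1/p) * opnorm (\<lambda>x. G1 x + G2 x) powr (1/q)"
  proof -
    have ub: "Re (hinner x (S x)) \<le> opnorm S" if "bounded_op S" for S :: "'a \<Rightarrow> 'a"
    proof -
      have "Re (hinner x (S x)) \<le> cmod (hinner x (S x))" by (rule complex_Re_le_cmod)
      also have "\<dots> \<le> hnorm x * hnorm (S x)" by (rule cauchy_schwarz)
      also have "\<dots> \<le> opnorm S" using opnorm_bound[OF that, of x] x by simp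
      finally show ?thesis .
    qed
    have "a1 + a2 = Re (hinner x (F1 x + F2 x))" by (simp add: a1_def a2_def hinner_add_right)
    also have "\<dots> \<le> opnorm (\<lambda>x. F1 x + F2 x)" using ub[OF bo_add_op[OF F1p(1) F2p(1)]] by simp
    finally have A: "a1 + a2 \<le> opnorm (\<lambda>x. F1 x + F2 x)" .
    have "b1 + b2 = Re (hinner x (G1 x + G2 x))" by (simp add: b1_def b2_def hinner_add_right)
    also have "\<dots> \<le> opnorm (\<lambda>x. G1 x + G2 x)" using ub[OF bo_add_op[OF G1p(1) G2p(1)]] by simp
    finally have B: "b1 + b2 \<le> opnorm (\<lambda>x. G1 x + G2 x)" .
    show ?thesis using A B nn2 pq by (intro mult_mono powr_mono2) auto
  qed
  finally show ?thesis by (simp add: a_def b_def F1_def F2_def G1_def G2_def)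
qed

lemma numrad_bound:
  fixes A :: "'a::chilbert \<Rightarrow> 'a"
  assumes hom: "\<And>c x. A (c *\<^sub>H x) = c *\<^sub>H A x"
    and bd: "\<And>x. hnorm x \<le> 1 \<Longrightarrow> cmod (hinner x (A x)) \<le> K"
    and unit: "\<And>x. hnorm x = 1 \<Longrightarrow> cmod (hinner x (A x)) powr r \<le> R"
    and R: "R \<ge> 0" and r: "r > 0"
  shows "numrad A powr r \<le> R"
proof -
  define N where "N = {cmod (hinner x (A x)) | x. hnorm x \<le> 1}"
  have nA: "numrad A = Sup N" by (simp add: numrad_def N_def)
  have zN: "0 \<in> N" unfolding N_def by (auto intro!: exI[of _ 0])
  have el: "c \<le> R powr (1/r)" if cN: "c \<in> N" for c
  proof -
    obtain x where c: "c = cmod (hinner x (A x))" and x1: "hnorm x \<le> 1" using cN unfolding N_def by blast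
    show ?thesis
    proof (cases "x = 0")
      case True then show ?thesis by (simp add: c)
    next
      case False
      define h where "h = hnorm x"
      have hp: "h > 0" using False hnorm_pos by (simp add: h_def)
      define y where "y = complex_of_real (1 / h) *\<^sub>H x"
      have hy: "hnorm y = 1" using hp False by (simp add: y_def hnorm_scale norm_divide h_def)
      have xy: "x = complex_of_real h *\<^sub>H y" using hp by (simp add: y_def hscale_hscale hscale_one)
      have "hinner x (A x) = complex_of_real (h * h) * hinner y (A y)"
        unfolding xy hom by (simp add: hinner_scale_left hinner_scale_right mult.assoc)
      then have "c = (h * h) * cmod (hinner y (A y))" using hp by (simp add: c norm_mult)
      also have "\<dots> \<le> 1 * cmod (hinner y (A y))"
        using hp x1 by (intro mult_right_mono) (auto simp: h_def mult_le_one)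
      also have "1 * cmod (hinner y (A y)) = (cmod (hinner y (A y)) powr r) powr (1/r)"
        using r by (simp add: powr_powr)
      also have "\<dots> \<le> R powr (1/r)" using unit[OF hy] r by (intro powr_mono2) auto
      finally show ?thesis .
    qed
  qed
  have bdd: "bdd_above N" unfolding bdd_above_def N_def using bd by blast
  have n0: "0 \<le> numrad A" unfolding nA by (rule cSup_upper[OF zN bdd])
  have "numrad A \<le> R powr (1/r)" unfolding nA using zN el by (intro cSup_least) auto
  then have "numrad A powr r \<le> (R powr (1/r)) powr r" using n0 r by (intro powr_mono2) auto
  also have "\<dots> = R" using r R by (simp add: powr_powr)
  finally show ?thesis .
qed

theorem corollary3p12:
  fixes A B C :: "'a::chilbert \<Rightarrow> 'a"
    and r p q :: real
    and f1 g1 f2 g2 :: "real \<Rightarrow> real"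
  assumes "bounded_op B" and "selfadjoint B"
    and "bounded_op C" and "selfadjoint C"
    and "\<forall>x. A x = B x + \<i> *\<^sub>H C x"
    and "r \<ge> 2" and "p > 1" and "q > 1" and "1 / p + 1 / q = 1"
    and "continuous_on {0..} f1" and "continuous_on {0..} g1"
    and "continuous_on {0..} f2" and "continuous_on {0..} g2"
    and "\<forall>t\<ge>0. f1 t \<ge> 0 \<and> g1 t \<ge> 0 \<and> f2 t \<ge> 0 \<and> g2 t \<ge> 0"
    and "\<forall>t\<ge>0. f1 t * g1 t = t" and "\<forall>t\<ge>0. f2 t * g2 t = t"
  shows "numrad A powr r \<le> 1 / 2
           * opnorm (\<lambda>x. fpow f1 (r * p) (absop (\<lambda>y. B y + C y)) x
                        + fpow f2 (r * p) (absop (\<lambda>y. B y - C y)) x) powr (1 / p)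
           * opnorm (\<lambda>x. fpow g1 (r * q) (absop (\<lambda>y. B y + C y)) x
                        + fpow g2 (r * q) (absop (\<lambda>y. B y - C y)) x) powr (1 / q)
       \<and> numrad A powr r \<le> 1 / 2
           * opnorm (\<lambda>x. fpow f1 (r * p) (absop (\<lambda>y. B y + C y)) x
                        + fpow g2 (r * p) (absop (\<lambda>y. B y - C y)) x) powr (1 / p)
           * opnorm (\<lambda>x. fpow g1 (r * q) (absop (\<lambda>y. B y + C y)) x
                        + fpow f2 (r * q) (absop (\<lambda>y. B y - C y)) x) powr (1 / q)"
proof -
  note bB = assms(1) and sB = assms(2) and bC = assms(3) and sC = assms(4) and Adef = assms(5)
  note r = assms(6) and pq = assms(7-9) and cs = assms(10-13) and nn = assms(14)
  note fg1 = assms(15) and fg2 = assms(16)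
  have fg2': "\<forall>t\<ge>0. g2 t * f2 t = t" using fg2 by (simp add: mult.commute)
  have nn': "\<forall>t\<ge>0. f1 t \<ge> 0 \<and> g1 t \<ge> 0 \<and> g2 t \<ge> 0 \<and> f2 t \<ge> 0" using nn by blast
  define T1 where "T1 = (\<lambda>y. B y + C y)"
  define T2 where "T2 = (\<lambda>y. B y - C y)"
  have bT1: "bounded_op T1" unfolding T1_def by (rule bo_add_op[OF bB bC])
  have bT2: "bounded_op T2" unfolding T2_def by (rule bo_diff_op[OF bB bC])
  have sT1: "selfadjoint T1" unfolding T1_def by (rule selfadjoint_add[OF sB sC])
  have sT2: "selfadjoint T2" unfolding T2_def by (rule selfadjoint_diff[OF sB sC])
  have hom: "A (c *\<^sub>H x) = c *\<^sub>H A x" for c x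
    by (simp add: Adef bo_scale[OF bB] bo_scale[OF bC] hscale_add_right hscale_hscale mult.commute)
  have bd: "cmod (hinner x (A x)) \<le> opnorm B + opnorm C" if "hnorm x \<le> 1" for x
  proof -
    have hb: "cmod (hinner x (S x)) \<le> opnorm S" if "bounded_op S" for S :: "'a \<Rightarrow> 'a"
    proof -
      have "cmod (hinner x (S x)) \<le> hnorm x * hnorm (S x)" by (rule cauchy_schwarz)
      also have "\<dots> \<le> 1 * (opnorm S * 1)"
        using \<open>hnorm x \<le> 1\<close> opnorm_bound[OF that, of x] opnorm_nonneg[OF that]
        by (intro mult_mono) (auto intro: order_trans mult_left_le)
      finally show ?thesis by simp
    qed
    have "hinner x (A x) = hinner x (B x) + \<i> * hinner x (C x)" by (simp add: Adef hinner_add_right hinner_scale_right)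
    then have "cmod (hinner x (A x)) \<le> cmod (hinner x (B x)) + cmod (hinner x (C x))"
      by (metis norm_triangle_ineq norm_mult norm_ii mult_1)
    then show ?thesis using hb[OF bB] hb[OF bC] by linarith
  qed
  have unit: "cmod (hinner x (A x)) powr r = ((Re (hinner x (T1 x)) ^ 2 + Re (hinner x (T2 x)) ^ 2) / 2) powr (r / 2)"
    if "hnorm x = 1" for x
  proof -
    define be where "be = Re (hinner x (B x))"
    define ga where "ga = Re (hinner x (C x))"
    have hB: "hinner x (B x) = complex_of_real be" unfolding be_def by (rule selfadjoint_real[OF sB])
    have hC: "hinner x (C x) = complex_of_real ga" unfolding ga_def by (rule selfadjoint_real[OF sC])
    have hA: "hinner x (A x) = complex_of_real be + \<i> * complex_of_real ga"
      by (simp add: Adef hinner_add_right hinner_scale_right hB hC)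
    have c2: "cmod (hinner x (A x)) ^ 2 = be ^ 2 + ga ^ 2" by (simp add: hA cmod_power2)
    have t1: "Re (hinner x (T1 x)) = be + ga" by (simp add: T1_def hinner_add_right be_def ga_def)
    have t2: "Re (hinner x (T2 x)) = be - ga" by (simp add: T2_def hinner_diff_right be_def ga_def)
    have "cmod (hinner x (A x)) powr r = (cmod (hinner x (A x)) ^ 2) powr (r / 2)" by (simp add: sq_powr)
    also have "cmod (hinner x (A x)) ^ 2 = ((Re (hinner x (T1 x)) ^ 2 + Re (hinner x (T2 x)) ^ 2) / 2)"
      by (simp only: c2 t1 t2) (simp add: power2_eq_square algebra_simps)
    finally show ?thesis .
  qed
  have r0: "r > 0" using r by simp
  have R0: "0 \<le> 1 / 2 * a powr (1 / p) * b powr (1 / q)" for a b :: real by simp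
  have main1: "numrad A powr r \<le> 1 / 2
           * opnorm (\<lambda>x. fpow f1 (r * p) (absop T1) x + fpow f2 (r * p) (absop T2) x) powr (1 / p)
           * opnorm (\<lambda>x. fpow g1 (r * q) (absop T1) x + fpow g2 (r * q) (absop T2) x) powr (1 / q)"
  proof (rule numrad_bound[OF hom bd _ R0 r0])
    fix x :: 'a assume x: "hnorm x = 1"
    show "cmod (hinner x (A x)) powr r \<le> 1 / 2
           * opnorm (\<lambda>x. fpow f1 (r * p) (absop T1) x + fpow f2 (r * p) (absop T2) x) powr (1 / p)
           * opnorm (\<lambda>x. fpow g1 (r * q) (absop T1) x + fpow g2 (r * q) (absop T2) x) powr (1 / q)"
      unfolding unit[OF x] by (rule combine[OF bT1 sT1 bT2 sT2 cs nn fg1 fg2 r pq x])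
  qed simp
  have main2: "numrad A powr r \<le> 1 / 2
           * opnorm (\<lambda>x. fpow f1 (r * p) (absop T1) x + fpow g2 (r * p) (absop T2) x) powr (1 / p)
           * opnorm (\<lambda>x. fpow g1 (r * q) (absop T1) x + fpow f2 (r * q) (absop T2) x) powr (1 / q)"
  proof (rule numrad_bound[OF hom bd _ R0 r0])
    fix x :: 'a assume x: "hnorm x = 1"
    show "cmod (hinner x (A x)) powr r \<le> 1 / 2
           * opnorm (\<lambda>x. fpow f1 (r * p) (absop T1) x + fpow g2 (r * p) (absop T2) x) powr (1 / p)
           * opnorm (\<lambda>x. fpow g1 (r * q) (absop T1) x + fpow f2 (r * q) (absop T2) x) powr (1 / q)"
      unfolding unit[OF x] by (rule combine[OF bT1 sT1 bT2 sT2 cs(1,2) cs(4,3) nn' fg1 fg2' r pq x])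
  qed simp
  show ?thesis using main1 main2 by (simp add: T1_def T2_def)
qed

end
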